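(* Let $S$ be a positive martingale with $S_0=1$ modelling a risky asset, and for $t>0$, $k\in\mathbb R$ let $C(t,k)=\mathbb E[(S_t-e^k)^+]$ and $P(t,k)=\mathbb E[(e^k-S_t)^+]$. Fix $\theta\in\mathbb R\setminus\{0\}$ and set $k_t=\theta\left(t\log\frac1t\right)^{1/2}$. Let $\widehat C_t$ and $\widehat P_t$ be deterministic functions with $C(t,k_t)\sim\widehat C_t$ and $P(t,k_t)\sim\widehat P_t$ as $t\downarrow0$, and define $\widehat I_t(\theta)=\widehat C_t1_{\{\theta>0\}}+\widehat P_t1_{\{\theta<0\}}$ and $I_t(\theta)=C(t,k_t)1_{\{\theta>0\}}+P(t,k_t)1_{\{\theta<0\}}$. Assume $$\frac12<\liminf_{t\downarrow0}\frac{\log I_t(\theta)}{\log t}\le\limsup_{t\downarrow0}\frac{\log I_t(\theta)}{\log t}<\infty.$$ For $x,t>0$ let $J_t(x)=\frac{\log x}{\log t}-\frac{\log\log\frac1t}{\log\frac1t}$, and put $L_t(\theta)=J_t(I_t(\theta))$, $\widehat L_t(\theta)=J_t(\widehat I_t(\theta))$. Then the implied volatility $\sigma_t(\theta):=\widehat\sigma(t,k_t)$ satisfies, as $t\downarrow0$, $$\sigma_t(\theta)=\frac{|\theta|}{\sqrt{2L_t(\theta)-1}}+\frac{|\theta|\log\frac{(2L_t(\theta)-1)^{3/2}\sqrt{2\pi}}{|\theta|}}{(2L_t(\theta)-1)^{3/2}}\frac{1}{\log\frac1t}+O\!\left(\frac{1}{\log^2\frac1t}\right),$$ and $$\sigma_t(\theta)=\frac{|\theta|}{\sqrt{2\widehat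 L_t(\theta)-1}}+\frac{|\theta|\log\frac{(2\widehat L_t(\theta)-1)^{3/2}\sqrt{2\pi}}{|\theta|}}{(2\widehat L_t(\theta)-1)^{3/2}}\frac{1}{\log\frac1t}+o\!\left(\frac{1}{\log\frac1t}\right).$$
   Context: Black–Scholes call price: $C^{\mathrm{BS}}(t,k,\sigma)=N(d_+)-e^kN(d_-)$ with $d_\pm=-\frac{k}{\sigma\sqrt t}\pm\frac{\sigma\sqrt t}{2}$, $N$ the standard normal CDF. The implied volatility $\widehat\sigma(t,k)$ is the unique $\sigma>0$ with $C^{\mathrm{BS}}(t,k,\sigma)=C(t,k)$ (equivalently, by put–call parity, matching the Black–Scholes put price $e^kN(-d_+)-N(-d_-)$ to $P(t,k)$). Notation: $f\sim g$ means $f/g\to1$; $f=o(g)$ means $f/g\to0$; $f=O(g)$ means $f/g$ bounded for small $t>0$; all as $t\downarrow0$. *)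

theory Defs
  imports "HOL-Probability.Probability" "HOL-Library.Landau_Symbols"
begin

definition martingale :: "'a measure \<Rightarrow> (real \<Rightarrow> 'a measure) \<Rightarrow> (real \<Rightarrow> 'a \<Rightarrow> real) \<Rightarrow> bool" where
  "martingale M F S \<longleftrightarrow>
     prob_space M \<and>
     (\<forall>t\<ge>0. subalgebra M (F t)) \<and>
     (\<forall>s t. 0 \<le> s \<longrightarrow> s \<le> t \<longrightarrow> sets (F s) \<subseteq> sets (F t)) \<and>
     (\<forall>t\<ge>0. S t \<in> borel_measurable (F t)) \<and>
     (\<forall>t\<ge>0. integrable M (S t)) \<and>
     (\<forall>s t. 0 \<le> s \<longrightarrow> s \<le> t \<longrightarrow> (AE \<omega> in M. real_cond_exp M (F s) (S t) \<omega> = S s \<omega>))"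

definition call_price :: "'a measure \<Rightarrow> (real \<Rightarrow> 'a \<Rightarrow> real) \<Rightarrow> real \<Rightarrow> real \<Rightarrow> real" where
  "call_price M S t k = (\<integral>\<omega>. max (S t \<omega> - exp k) 0 \<partial>M)"

definition put_price :: "'a measure \<Rightarrow> (real \<Rightarrow> 'a \<Rightarrow> real) \<Rightarrow> real \<Rightarrow> real \<Rightarrow> real" where
  "put_price M S t k = (\<integral>\<omega>. max (exp k - S t \<omega>) 0 \<partial>M)"

definition Ncdf :: "real \<Rightarrow> real" where
  "Ncdf x = (LINT y:{..x}|lborel. std_normal_density y)"

definition d_plus :: "real \<Rightarrow> real \<Rightarrow> real \<Rightarrow> real" where
  "d_plus t k \<sigma> = - k / (\<sigma> * sqrt t) + \<sigma> * sqrt t / 2"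

definition d_minus :: "real \<Rightarrow> real \<Rightarrow> real \<Rightarrow> real" where
  "d_minus t k \<sigma> = - k / (\<sigma> * sqrt t) - \<sigma> * sqrt t / 2"

definition BS_call :: "real \<Rightarrow> real \<Rightarrow> real \<Rightarrow> real" where
  "BS_call t k \<sigma> = Ncdf (d_plus t k \<sigma>) - exp k * Ncdf (d_minus t k \<sigma>)"

definition implied_vol :: "real \<Rightarrow> real \<Rightarrow> real \<Rightarrow> real" where
  "implied_vol t k C = (THE \<sigma>. \<sigma> > 0 \<and> BS_call t k \<sigma> = C)"

definition J_fun :: "real \<Rightarrow> real \<Rightarrow> real" where
  "J_fun t x = ln x / ln t - ln (ln (1 / t)) / ln (1 / t)"

end

theory Submission
  imports Defs "HOL-Real_Asymp.Real_Asymp"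
begin


lemma mart_expect:
  assumes mart: "martingale M F S" and init: "\<And>\<omega>. \<omega> \<in> space M \<Longrightarrow> S 0 \<omega> = 1" and t: "t \<ge> 0"
  shows "(\<integral>\<omega>. S t \<omega> \<partial>M) = 1" "integrable M (S t)"
proof -
  have ps: "prob_space M" and sub: "subalgebra M (F 0)" and int: "integrable M (S t)"
    and ae: "AE \<omega> in M. real_cond_exp M (F 0) (S t) \<omega> = S 0 \<omega>"
    using mart t unfolding martingale_def by auto
  interpret prob_space M by (fact ps)
  interpret finite_measure_subalgebra M "F 0" by unfold_locales (fact sub)
  have "(\<integral>\<omega>. S t \<omega> \<partial>M) = (\<integral>\<omega>. real_cond_exp M (F 0) (S t) \<omega> \<partial>M)"
    using real_cond_exp_int(2)[OF int] by simp
  also have "\<dots> = (\<integral>\<omega>. 1 \<partial>M)"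
    by (rule integral_cong_AE) (use ae init in \<open>auto intro!: borel_measurable_integrable real_cond_exp_int(1)[OF int]\<close>)
  also have "\<dots> = 1" by (simp add: prob_space)
  finally show "(\<integral>\<omega>. S t \<omega> \<partial>M) = 1" .
  show "integrable M (S t)" by (fact int)
qed


lemma prices:
  assumes mart: "martingale M F S" and pos: "\<And>t \<omega>. t \<ge> 0 \<Longrightarrow> \<omega> \<in> space M \<Longrightarrow> S t \<omega> > 0"
    and init: "\<And>\<omega>. \<omega> \<in> space M \<Longrightarrow> S 0 \<omega> = 1" and t: "t \<ge> 0"
  shows "call_price M S t k - put_price M S t k = 1 - exp k"
    "call_price M S t k < 1" "put_price M S t k < exp k"
    "call_price M S t k \<ge> 0" "put_price M S t k \<ge> 0"
proof -
  have ps: "prob_space M" using mart unfolding martingale_def by auto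
  interpret prob_space M by (fact ps)
  note E = mart_expect[OF mart init t]
  have ic: "integrable M (\<lambda>\<omega>. max (S t \<omega> - exp k) 0)"
    by (intro integrable_max Bochner_Integration.integrable_diff E(2) integrable_const)
  have ip: "integrable M (\<lambda>\<omega>. max (exp k - S t \<omega>) 0)"
    by (intro integrable_max Bochner_Integration.integrable_diff E(2) integrable_const)
  have "call_price M S t k - put_price M S t k = (\<integral>\<omega>. max (S t \<omega> - exp k) 0 - max (exp k - S t \<omega>) 0 \<partial>M)"
    unfolding call_price_def put_price_def by (rule Bochner_Integration.integral_diff[symmetric, OF ic ip])
  also have "\<dots> = (\<integral>\<omega>. S t \<omega> - exp k \<partial>M)"
    by (rule Bochner_Integration.integral_cong) auto
  also have "\<dots> = 1 - exp k" using E by (simp add: prob_space)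
  finally show "call_price M S t k - put_price M S t k = 1 - exp k" .
  have "call_price M S t k < (\<integral>\<omega>. S t \<omega> \<partial>M)" unfolding call_price_def
    by (rule integral_less_AE_space[OF ic E(2)]) (use pos t in \<open>auto simp: emeasure_space_1\<close>)
  then show "call_price M S t k < 1" using E by simp
  have "put_price M S t k < (\<integral>\<omega>. exp k \<partial>M)" unfolding put_price_def
    by (rule integral_less_AE_space[OF ip]) (use pos t in \<open>auto simp: emeasure_space_1\<close>)
  then show "put_price M S t k < exp k" by (simp add: prob_space)
  show "call_price M S t k \<ge> 0" "put_price M S t k \<ge> 0"
    unfolding call_price_def put_price_def by (auto intro!: integral_nonneg_AE)
qed


lemma phi_set_integrable: "A \<in> sets borel \<Longrightarrow> set_integrable lborel A std_normal_density"
  unfolding set_integrable_def by (rule integrable_mult_indicator) auto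

lemma Ncdf_interval: "Ncdf x = (LBINT y=-\<infinity>..ereal x. std_normal_density y)"
proof -
  have "(LBINT y=-\<infinity>..ereal x. std_normal_density y) =
        (LBINT y : {y. -\<infinity> \<le> ereal y \<and> ereal y \<le> ereal x}. std_normal_density y)"
    by (rule interval_integral_Icc') simp
  also have "{y. -\<infinity> \<le> ereal y \<and> ereal y \<le> ereal x} = {..x}" by auto
  finally show ?thesis unfolding Ncdf_def by simp
qed

lemma Ncdf_split: "Ncdf x = Ncdf 0 + (LBINT y=ereal 0..ereal x. std_normal_density y)"
proof -
  have "(LBINT y=-\<infinity>..ereal 0. std_normal_density y) + (LBINT y=ereal 0..ereal x. std_normal_density y)
      = (LBINT y=-\<infinity>..ereal x. std_normal_density y)"
    by (rule interval_integral_sum) (simp add: interval_lebesgue_integrable_def phi_set_integrable)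
  then show ?thesis unfolding Ncdf_interval by simp
qed

lemma phi_cont: "continuous_on A std_normal_density"
  unfolding std_normal_density_def by (intro continuous_intros) auto

lemma Ncdf_deriv: "(Ncdf has_real_derivative std_normal_density x) (at x)"
proof -
  let ?a = "min 0 x - 1" and ?b = "max 0 x + 1"
  have "((\<lambda>u. LBINT y=ereal 0..ereal u. std_normal_density y) has_vector_derivative std_normal_density x) (at x within {?a..?b})"
    by (rule interval_integral_FTC2) (auto intro: phi_cont)
  then have "((\<lambda>u. LBINT y=ereal 0..ereal u. std_normal_density y) has_vector_derivative std_normal_density x) (at x)"
    by (subst (asm) at_within_interior) auto
  then have "((\<lambda>u. Ncdf 0 + (LBINT y=ereal 0..ereal u. std_normal_density y)) has_real_derivative std_normal_density x) (at x)"
    unfolding has_real_derivative_iff_has_vector_derivative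
    by (auto intro!: derivative_eq_intros)
  then show ?thesis by (simp add: Ncdf_split[symmetric])
qed

lemma Ncdf_cont: "isCont Ncdf x"
  by (rule DERIV_isCont[OF Ncdf_deriv])

lemma Ncdf_top: "(Ncdf \<longlongrightarrow> 1) at_top"
proof -
  have "((\<lambda>y. \<integral>x. indicator {..y} x *\<^sub>R std_normal_density x \<partial>lborel) \<longlongrightarrow> \<integral>x. std_normal_density x \<partial>lborel) at_top"
    by (rule tendsto_integral_at_top) auto
  then show ?thesis unfolding Ncdf_def[abs_def] set_lebesgue_integral_def by simp
qed

lemma Ncdf_bot: "(Ncdf \<longlongrightarrow> 0) at_bot"
proof -
  have lim: "AE x in lborel. ((\<lambda>y. indicator {..- y} x * std_normal_density x) \<longlongrightarrow> 0) at_top"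
  proof (rule AE_I2)
    fix x :: real
    have "eventually (\<lambda>y. - x + 1 \<le> y) at_top" by (rule eventually_ge_at_top)
    then have "eventually (\<lambda>y. indicator {..- y} x * std_normal_density x = 0) at_top"
      by eventually_elim (auto split: split_indicator)
    then show "((\<lambda>y. indicator {..- y} x * std_normal_density x) \<longlongrightarrow> 0) at_top"
      by (rule tendsto_eventually)
  qed
  have bnd: "\<forall>\<^sub>F i in at_top. AE x in lborel. indicator {..- i} x * std_normal_density x \<le> std_normal_density x"
    by (auto split: split_indicator)
  have "((\<lambda>y. \<integral>x. indicator {..-y} x *\<^sub>R std_normal_density x \<partial>lborel) \<longlongrightarrow> \<integral>x. 0 \<partial>lborel) at_top"
    using integral_dominated_convergence_at_top[where w=std_normal_density and f="\<lambda>x. 0::real" and s="\<lambda>y x. indicator {..-y} x *\<^sub>R std_normal_density x" and M=lborel] lim bnd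
    by simp
  then have "((\<lambda>y. Ncdf (- y)) \<longlongrightarrow> 0) at_top"
    unfolding Ncdf_def set_lebesgue_integral_def by simp
  then show ?thesis by (simp add: filterlim_at_bot_mirror)
qed


definition Bf :: "real \<Rightarrow> real \<Rightarrow> real" where
  "Bf k v = Ncdf (- k / v + v / 2) - exp k * Ncdf (- k / v - v / 2)"

definition Qf :: "real \<Rightarrow> real \<Rightarrow> real" where
  "Qf k v = Bf k v - max (1 - exp k) 0"

lemma BS_call_Bf: "BS_call t k \<sigma> = Bf k (\<sigma> * sqrt t)"
  unfolding BS_call_def Bf_def d_plus_def d_minus_def by simp

lemma Ncdf_chain [derivative_intros]:
  "(f has_real_derivative f') (at x within s) \<Longrightarrow> ((\<lambda>x. Ncdf (f x)) has_real_derivative std_normal_density (f x) * f') (at x within s)"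
  using DERIV_chain2[OF Ncdf_deriv] .

lemma phi_formula: "u \<noteq> 0 \<Longrightarrow> std_normal_density (- k / u + u / 2)
    = 1 / sqrt (2 * pi) * exp (k / 2) * exp (- (k^2) / (2 * u^2)) * exp (- (u^2) / 8)"
proof -
  assume u: "u \<noteq> 0"
  have "- ((- k / u + u / 2)^2) / 2 = k / 2 + (- (k^2) / (2 * u^2)) + (- (u^2) / 8)"
    using u by (simp add: field_simps power2_eq_square)
  then show ?thesis unfolding std_normal_density_def by (simp add: exp_add[symmetric] mult.assoc)
qed

lemma phi_shift: "u \<noteq> 0 \<Longrightarrow> exp k * std_normal_density (- k / u - u / 2) = std_normal_density (- k / u + u / 2)"
proof -
  assume u: "u \<noteq> 0"
  have "k + - ((- k / u - u / 2)^2) / 2 = - ((- k / u + u / 2)^2) / 2"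
    using u by (simp add: field_simps power2_eq_square)
  then show ?thesis unfolding std_normal_density_def
    by (metis (no_types, lifting) exp_add mult.left_commute)
qed

lemma Bf_deriv: "v \<noteq> 0 \<Longrightarrow> (Bf k has_real_derivative std_normal_density (- k / v + v / 2)) (at v)"
proof -
  assume v: "v \<noteq> 0"
  have "((\<lambda>v. Ncdf (- k / v + v / 2) - exp k * Ncdf (- k / v - v / 2)) has_real_derivative
     std_normal_density (- k / v + v / 2) * (k / v^2 + 1/2) - exp k * (std_normal_density (- k / v - v / 2) * (k / v^2 - 1/2))) (at v)"
    using v by (auto intro!: derivative_eq_intros simp: power2_eq_square field_simps)
  moreover have "std_normal_density (- k / v + v / 2) * (k / v^2 + 1/2) - exp k * (std_normal_density (- k / v - v / 2) * (k / v^2 - 1/2))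
     = std_normal_density (- k / v + v / 2)"
    using phi_shift[OF v, of k] by (simp add: algebra_simps)
  ultimately show ?thesis unfolding Bf_def[abs_def] by simp
qed

lemma Qf_deriv: "v \<noteq> 0 \<Longrightarrow> (Qf k has_real_derivative std_normal_density (- k / v + v / 2)) (at v)"
  unfolding Qf_def[abs_def] using Bf_deriv[of v k] by (auto intro!: derivative_eq_intros)


lemma Bf_lim_pos: "k > 0 \<Longrightarrow> (Bf k \<longlongrightarrow> 0) (at_right 0)"
proof -
  assume k: "k > 0"
  have 1: "filterlim (\<lambda>v. -k/v + v/2) at_bot (at_right 0)" using k by real_asymp
  have 2: "filterlim (\<lambda>v. -k/v - v/2) at_bot (at_right 0)" using k by real_asymp
  have "((\<lambda>v. Ncdf (-k/v + v/2) - exp k * Ncdf (-k/v - v/2)) \<longlongrightarrow> 0 - exp k * 0) (at_right 0)"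
    by (intro tendsto_intros filterlim_compose[OF Ncdf_bot 1] filterlim_compose[OF Ncdf_bot 2])
  then show ?thesis unfolding Bf_def[abs_def] by simp
qed

lemma Bf_lim_neg: "k < 0 \<Longrightarrow> (Bf k \<longlongrightarrow> 1 - exp k) (at_right 0)"
proof -
  assume k: "k < 0"
  have 1: "filterlim (\<lambda>v. -k/v + v/2) at_top (at_right 0)" using k by real_asymp
  have 2: "filterlim (\<lambda>v. -k/v - v/2) at_top (at_right 0)" using k by real_asymp
  have "((\<lambda>v. Ncdf (-k/v + v/2) - exp k * Ncdf (-k/v - v/2)) \<longlongrightarrow> 1 - exp k * 1) (at_right 0)"
    by (intro tendsto_intros filterlim_compose[OF Ncdf_top 1] filterlim_compose[OF Ncdf_top 2])
  then show ?thesis unfolding Bf_def[abs_def] by simp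
qed

lemma Qf_lim0: "k \<noteq> 0 \<Longrightarrow> (Qf k \<longlongrightarrow> 0) (at_right 0)"
proof -
  assume k: "k \<noteq> 0"
  show ?thesis
  proof (cases "k > 0")
    case True
    then have "max (1 - exp k) 0 = 0" by simp
    then show ?thesis using Bf_lim_pos[OF True] unfolding Qf_def[abs_def] by simp
  next
    case False
    then have k': "k < 0" using k by simp
    then have "max (1 - exp k) 0 = 1 - exp k" by simp
    then show ?thesis using tendsto_diff[OF Bf_lim_neg[OF k'] tendsto_const[of "1 - exp k"]]
      unfolding Qf_def[abs_def] by simp
  qed
qed

lemma Qf_lim_top: "(Qf k \<longlongrightarrow> 1 - max (1 - exp k) 0) at_top"
proof -
  have 1: "filterlim (\<lambda>v. -k/v + v/2) at_top at_top" by real_asymp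
  have 2: "filterlim (\<lambda>v. -k/v - v/2) at_bot at_top" by real_asymp
  have "((\<lambda>v. Ncdf (-k/v + v/2) - exp k * Ncdf (-k/v - v/2) - max (1 - exp k) 0) \<longlongrightarrow> 1 - exp k * 0 - max (1 - exp k) 0) at_top"
    by (intro tendsto_intros filterlim_compose[OF Ncdf_top 1] filterlim_compose[OF Ncdf_bot 2])
  then show ?thesis unfolding Qf_def[abs_def] Bf_def by simp
qed

lemma Qf_cont: "v > 0 \<Longrightarrow> isCont (Qf k) v"
  using Qf_deriv[of v k] DERIV_isCont by force

lemma phi_pos: "std_normal_density x > 0"
  by (simp add: normal_density_pos)

lemma Qf_strict_mono: assumes "0 < a" "a < b" shows "Qf k a < Qf k b"
proof (rule DERIV_pos_imp_increasing[of a b])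
  show "a < b" by (fact assms(2))
  fix x assume "a \<le> x" "x \<le> b"
  then have "x \<noteq> 0" using assms by simp
  then show "\<exists>y. (Qf k has_real_derivative y) (at x) \<and> 0 < y" using Qf_deriv phi_pos by blast
qed

lemma cmp_lemma:
  fixes h h' :: "real \<Rightarrow> real"
  assumes v: "v > 0" and d: "\<And>u. 0 < u \<Longrightarrow> u \<le> v \<Longrightarrow> (h has_real_derivative h' u) (at u) \<and> h' u \<le> 0"
    and lim: "(h \<longlongrightarrow> 0) (at_right 0)"
  shows "h v \<le> 0"
proof -
  have ev: "eventually (\<lambda>e. h v \<le> h e) (at_right 0)"
  proof -
    have "eventually (\<lambda>e. 0 < e \<and> e < v) (at_right 0)"
      using v by (auto simp: eventually_at_right_field intro!: exI[of _ v])
    then show ?thesis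
    proof eventually_elim
      case (elim e)
      show ?case
      proof (rule DERIV_nonpos_imp_nonincreasing[of e v h])
        show "e \<le> v" using elim by simp
        fix x assume "e \<le> x" "x \<le> v"
        then have "0 < x" using elim by simp
        then show "\<exists>y. (h has_real_derivative y) (at x) \<and> y \<le> 0" using d[of x] \<open>x \<le> v\<close> by blast
      qed
    qed
  qed
  show ?thesis by (rule tendsto_le[OF _ lim tendsto_const ev]) simp
qed


definition Hf :: "real \<Rightarrow> real \<Rightarrow> real" where
  "Hf k u = 1 / sqrt (2 * pi) * exp (k / 2) * (u^3 / k^2) * exp (- (k^2) / (2 * u^2))"

lemma Hf_deriv:
  assumes "u \<noteq> 0" "k \<noteq> 0"
  shows "(Hf k has_real_derivative 1 / sqrt (2 * pi) * exp (k / 2) * exp (- (k^2) / (2 * u^2)) * (1 + 3 * u^2 / k^2)) (at u)"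
proof -
  have "((\<lambda>u. u^3 * exp (- (k^2) / (2 * u^2))) has_real_derivative exp (- (k^2) / (2 * u^2)) * (3 * u^2 + k^2)) (at u)"
    using assms by (auto intro!: derivative_eq_intros simp: field_simps power2_eq_square power3_eq_cube)
  then have "((\<lambda>u. 1 / sqrt (2 * pi) * exp (k / 2) / k^2 * (u^3 * exp (- (k^2) / (2 * u^2)))) has_real_derivative
     1 / sqrt (2 * pi) * exp (k / 2) / k^2 * (exp (- (k^2) / (2 * u^2)) * (3 * u^2 + k^2))) (at u)"
    by (rule DERIV_cmult)
  moreover have "(\<lambda>u. 1 / sqrt (2 * pi) * exp (k / 2) / k^2 * (u^3 * exp (- (k^2) / (2 * u^2)))) = Hf k"
    by (auto simp: Hf_def fun_eq_iff)
  moreover have "1 / sqrt (2 * pi) * exp (k / 2) / k^2 * (exp (- (k^2) / (2 * u^2)) * (3 * u^2 + k^2))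
     = 1 / sqrt (2 * pi) * exp (k / 2) * exp (- (k^2) / (2 * u^2)) * (1 + 3 * u^2 / k^2)"
    using assms by (simp add: field_simps)
  ultimately show ?thesis by simp
qed

lemma Hf_lim0: "k \<noteq> 0 \<Longrightarrow> (Hf k \<longlongrightarrow> 0) (at_right 0)"
proof -
  assume k: "k \<noteq> 0"
  have "((\<lambda>u. u^3 / k^2 * exp (- (k^2) / (2 * u^2))) \<longlongrightarrow> 0) (at_right 0)" using k by real_asymp
  then have "((\<lambda>u. 1 / sqrt (2 * pi) * exp (k / 2) * (u^3 / k^2 * exp (- (k^2) / (2 * u^2)))) \<longlongrightarrow> 1 / sqrt (2 * pi) * exp (k / 2) * 0) (at_right 0)"
    by (intro tendsto_intros)
  then show ?thesis unfolding Hf_def[abs_def] by (simp add: mult.assoc)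
qed

lemma Qf_upper:
  assumes k: "k \<noteq> 0" and v: "v > 0"
  shows "Qf k v \<le> Hf k v"
proof -
  let ?c = "1 / sqrt (2 * pi) * exp (k / 2)"
  have "(\<lambda>u. Qf k u - Hf k u) v \<le> 0"
  proof (rule cmp_lemma[OF v])
    fix u :: real assume u: "0 < u" "u \<le> v"
    let ?E = "exp (- (k^2) / (2 * u^2))"
    have "((\<lambda>u. Qf k u - Hf k u) has_real_derivative
      std_normal_density (- k / u + u / 2) - ?c * ?E * (1 + 3 * u^2 / k^2)) (at u)"
      using u k by (intro DERIV_diff Qf_deriv Hf_deriv) auto
    moreover have "std_normal_density (- k / u + u / 2) - ?c * ?E * (1 + 3 * u^2 / k^2) \<le> 0"
    proof -
      have "std_normal_density (- k / u + u / 2) = ?c * ?E * exp (- (u^2) / 8)"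
        by (rule phi_formula) (use u in simp)
      moreover have e2: "exp (- (u^2) / 8) \<le> 1 + 3 * u^2 / k^2" using k
        by (simp add: order.trans[of _ 1])
      moreover have e3: "?c * ?E \<ge> 0" by simp
      ultimately show ?thesis using mult_left_mono[OF e2 e3] by linarith
    qed
    ultimately show "((\<lambda>u. Qf k u - Hf k u) has_real_derivative
      std_normal_density (- k / u + u / 2) - ?c * ?E * (1 + 3 * u^2 / k^2)) (at u) \<and>
      std_normal_density (- k / u + u / 2) - ?c * ?E * (1 + 3 * u^2 / k^2) \<le> 0" by blast
  next
    show "((\<lambda>u. Qf k u - Hf k u) \<longlongrightarrow> 0) (at_right 0)"
      using tendsto_diff[OF Qf_lim0[OF k] Hf_lim0[OF k]] by simp
  qed
  then show ?thesis by simp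
qed

lemma aux_prod: "b \<le> a \<Longrightarrow> 0 \<le> a \<Longrightarrow> 0 \<le> b \<Longrightarrow> (1 - a) * (1 + b) \<le> (1::real)"
proof -
  assume "b \<le> a" "0 \<le> a" "0 \<le> b"
  then have "a * b \<ge> 0" by simp
  moreover have "(1 - a) * (1 + b) = 1 + (b - a) - a * b" by (simp add: algebra_simps)
  ultimately show ?thesis using \<open>b \<le> a\<close> by linarith
qed

lemma Qf_lower:
  assumes k: "k \<noteq> 0" and v: "v > 0"
  shows "exp (- (v^2) / 8) * (1 - 3 * v^2 / k^2) * Hf k v \<le> Qf k v"
proof -
  let ?c = "1 / sqrt (2 * pi) * exp (k / 2)"
  let ?A = "exp (- (v^2) / 8) * (1 - 3 * v^2 / k^2)"
  have "(\<lambda>u. ?A * Hf k u - Qf k u) v \<le> 0"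
  proof (rule cmp_lemma[OF v, where h="\<lambda>u. ?A * Hf k u - Qf k u"])
    fix u :: real assume u: "0 < u" "u \<le> v"
    let ?E = "exp (- (k^2) / (2 * u^2))"
    have "((\<lambda>u. ?A * Hf k u - Qf k u) has_real_derivative
      ?A * (?c * ?E * (1 + 3 * u^2 / k^2)) - std_normal_density (- k / u + u / 2)) (at u)"
      using u k by (intro DERIV_diff DERIV_cmult Qf_deriv Hf_deriv) auto
    moreover have "?A * (?c * ?E * (1 + 3 * u^2 / k^2)) - std_normal_density (- k / u + u / 2) \<le> 0"
    proof -
      have e1: "std_normal_density (- k / u + u / 2) = ?c * ?E * exp (- (u^2) / 8)"
        by (rule phi_formula) (use u in simp)
      have P: "(1 - 3 * v^2 / k^2) * (1 + 3 * u^2 / k^2) \<le> 1"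
      proof (rule aux_prod)
        have "u^2 \<le> v^2" using u by (simp add: power_mono)
        then show "3 * u^2 / k^2 \<le> 3 * v^2 / k^2" by (simp add: divide_right_mono)
      qed auto
      have ev: "exp (- (v^2) / 8) \<le> exp (- (u^2) / 8)"
        using u by (simp add: power_mono)
      have "?A * (1 + 3 * u^2 / k^2) = exp (- (v^2) / 8) * ((1 - 3 * v^2 / k^2) * (1 + 3 * u^2 / k^2))"
        by (simp add: mult.assoc)
      also have "\<dots> \<le> exp (- (v^2) / 8) * 1"
        by (rule mult_left_mono[OF P]) simp
      also have "\<dots> \<le> exp (- (u^2) / 8)" using ev by simp
      finally have e4: "?A * (1 + 3 * u^2 / k^2) \<le> exp (- (u^2) / 8)" .
      have e3: "?c * ?E \<ge> 0" by simp
      have "?A * (?c * ?E * (1 + 3 * u^2 / k^2)) = ?c * ?E * (?A * (1 + 3 * u^2 / k^2))"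
        by (simp add: ac_simps)
      also have "\<dots> \<le> ?c * ?E * exp (- (u^2) / 8)" by (rule mult_left_mono[OF e4 e3])
      finally show ?thesis using e1 by linarith
    qed
    ultimately show "((\<lambda>u. ?A * Hf k u - Qf k u) has_real_derivative
      ?A * (?c * ?E * (1 + 3 * u^2 / k^2)) - std_normal_density (- k / u + u / 2)) (at u) \<and>
      ?A * (?c * ?E * (1 + 3 * u^2 / k^2)) - std_normal_density (- k / u + u / 2) \<le> 0" by blast
  next
    show "((\<lambda>u. ?A * Hf k u - Qf k u) \<longlongrightarrow> 0) (at_right 0)"
      using tendsto_diff[OF tendsto_mult_right_zero[OF Hf_lim0[OF k]] Qf_lim0[OF k]] by simp
  qed
  then show ?thesis by simp
qed


lemma Qf_exists:
  assumes k: "k \<noteq> 0" and y: "0 < y" "y < 1 - max (1 - exp k) 0"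
  shows "\<exists>v>0. Qf k v = y"
proof -
  have "eventually (\<lambda>u. Qf k u < y) (at_right 0)"
    using order_tendstoD(2)[OF Qf_lim0[OF k] y(1)] .
  then obtain b where b: "b > 0" "\<And>u. u > 0 \<Longrightarrow> u < b \<Longrightarrow> Qf k u < y"
    unfolding eventually_at_right_field by auto
  define a where "a = b / 2"
  have a: "a > 0" "Qf k a < y" using b by (auto simp: a_def)
  have "eventually (\<lambda>u. y < Qf k u) at_top"
    using order_tendstoD(1)[OF Qf_lim_top y(2)] .
  then obtain N where N: "\<And>u. u \<ge> N \<Longrightarrow> y < Qf k u"
    unfolding eventually_at_top_linorder by auto
  define c where "c = max N (a + 1)"
  have c: "a \<le> c" "y < Qf k c" using N by (auto simp: c_def)
  have "continuous_on {a..c} (Qf k)"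
    using a(1) by (intro continuous_at_imp_continuous_on) (auto intro: Qf_cont)
  then obtain x where "a \<le> x" "x \<le> c" "Qf k x = y"
    using IVT'[of "Qf k" a y c] a c by auto
  then show ?thesis using a(1) by (intro exI[of _ x]) auto
qed

lemma implied_vol_char:
  assumes t: "t > 0" and k: "k \<noteq> 0"
    and y: "0 < C - max (1 - exp k) 0" "C - max (1 - exp k) 0 < 1 - max (1 - exp k) 0"
  shows "implied_vol t k C > 0" "Qf k (implied_vol t k C * sqrt t) = C - max (1 - exp k) 0"
proof -
  obtain v where v: "v > 0" "Qf k v = C - max (1 - exp k) 0" using Qf_exists[OF k y] by blast
  define s where "s = v / sqrt t"
  have sv: "s * sqrt t = v" using t by (simp add: s_def)
  have s: "s > 0" "BS_call t k s = C"
    using v t sv by (auto simp: s_def BS_call_Bf Qf_def)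
  have uniq: "s' = s" if "s' > 0" "BS_call t k s' = C" for s'
  proof -
    have q: "Qf k (s' * sqrt t) = Qf k v" using that v by (simp add: BS_call_Bf Qf_def)
    have p: "s' * sqrt t > 0" using that t by simp
    have "s' * sqrt t = v"
    proof (rule ccontr)
      assume "s' * sqrt t \<noteq> v"
      then consider "s' * sqrt t < v" | "s' * sqrt t > v" by linarith
      then show False
      proof cases
        case 1
        then show False using Qf_strict_mono[OF p 1, of k] q by simp
      next
        case 2
        then show False using Qf_strict_mono[OF v(1) 2, of k] q by simp
      qed
    qed
    then show ?thesis using t sv by (simp add: s_def field_simps)
  qed
  have "implied_vol t k C = s"
    unfolding implied_vol_def using s uniq by blast
  then show "implied_vol t k C > 0" "Qf k (implied_vol t k C * sqrt t) = C - max (1 - exp k) 0"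
    using s sv v by auto
qed


lemma Hf_pos: "k \<noteq> 0 \<Longrightarrow> v > 0 \<Longrightarrow> Hf k v > 0"
  unfolding Hf_def by simp

lemma Hf_closed:
  assumes t: "0 < t" "t < 1" and s: "s > 0" and th: "\<theta> \<noteq> 0"
    and tau: "\<tau> = ln (1 / t)" and k: "k = \<theta> * sqrt (t * \<tau>)"
  shows "Hf k (s * sqrt t) = exp (k / 2) * exp (- (\<theta>^2 * \<tau> / (2 * s^2))) * (s^3 / (\<theta>^2 * sqrt (2 * pi))) * sqrt t / \<tau>"
proof -
  have tp: "\<tau> > 0" using t tau by simp
  have k2: "k^2 = \<theta>^2 * t * \<tau>" using t tp k by (simp add: power_mult_distrib)
  have v2: "(s * sqrt t)^2 = s^2 * t" using t by (auto simp: power_mult_distrib)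
  have v3: "(s * sqrt t)^3 = s^3 * t * sqrt t"
  proof -
    have "(s * sqrt t)^3 = (s * sqrt t)^2 * (s * sqrt t)" by (simp add: power3_eq_cube power2_eq_square)
    then show ?thesis using v2 t by (auto simp: algebra_simps power3_eq_cube power2_eq_square)
  qed
  have a: "- (k^2) / (2 * (s * sqrt t)^2) = - (\<theta>^2 * \<tau> / (2 * s^2))"
    unfolding k2 v2 using t s by (simp add: field_simps)
  have b: "(s * sqrt t)^3 / k^2 = s^3 * sqrt t / (\<theta>^2 * \<tau>)"
    unfolding k2 v3 using t s th tp by (simp add: field_simps)
  show ?thesis unfolding Hf_def a b using tp th
    by (simp add: field_simps)
qed

lemma ln_Hf:
  assumes t: "0 < t" "t < 1" and s: "s > 0" and th: "\<theta> \<noteq> 0"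
    and tau: "\<tau> = ln (1 / t)" and k: "k = \<theta> * sqrt (t * \<tau>)"
  shows "ln (Hf k (s * sqrt t)) = - \<tau> / 2 - \<theta>^2 * \<tau> / (2 * s^2) - ln \<tau> + ln (s^3 / (\<theta>^2 * sqrt (2 * pi))) + k / 2"
proof -
  have tp: "\<tau> > 0" using t tau by simp
  have lt: "ln t = - \<tau>" using t tau by (simp add: ln_div)
  have p1: "s^3 / (\<theta>^2 * sqrt (2 * pi)) > 0" using s th by simp
  have "ln (Hf k (s * sqrt t)) = ln (exp (k / 2) * exp (- (\<theta>^2 * \<tau> / (2 * s^2))) * (s^3 / (\<theta>^2 * sqrt (2 * pi))) * sqrt t / \<tau>)"
    by (simp add: Hf_closed[OF assms])
  also have "\<dots> = (k / 2 - \<theta>^2 * \<tau> / (2 * s^2)) + ln (s^3 / (\<theta>^2 * sqrt (2 * pi))) + ln (sqrt t) - ln \<tau>"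
    using p1 t tp s th by (simp add: ln_div ln_mult)
  also have "ln (sqrt t) = - \<tau> / 2" using t lt by (simp add: ln_sqrt)
  finally show ?thesis by simp
qed

lemma key_identity:
  assumes t: "0 < t" "t < 1" and s: "s > 0" and th: "\<theta> \<noteq> 0"
    and tau: "\<tau> = ln (1 / t)" and k: "k = \<theta> * sqrt (t * \<tau>)"
    and Q: "Q > 0"
  shows "\<theta>^2 / s^2 = (2 * (ln Q / ln t - ln \<tau> / \<tau>) - 1)
            + (2 / \<tau>) * (ln (s^3 / (\<theta>^2 * sqrt (2 * pi))) + k / 2 + ln (Q / Hf k (s * sqrt t)))"
proof -
  have tp: "\<tau> > 0" using t tau by simp
  have lt: "ln t = - \<tau>" using t tau by (simp add: ln_div)
  have kn: "k \<noteq> 0" using k th t tp by simp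
  have H: "Hf k (s * sqrt t) > 0" using kn s t by (intro Hf_pos) auto
  have lq: "ln (Q / Hf k (s * sqrt t)) = ln Q - ln (Hf k (s * sqrt t))" using Q H by (simp add: ln_div)
  show ?thesis unfolding lq lt ln_Hf[OF assms(1-6)] using tp s
    by (simp add: field_simps)
qed


lemma inv_sqrt_lip:
  fixes y1 y2 m :: real
  assumes m: "m > 0" and y: "y1 \<ge> m" "y2 \<ge> m"
  shows "\<bar>1 / sqrt y1 - 1 / sqrt y2\<bar> \<le> \<bar>y1 - y2\<bar> / (2 * m * sqrt m)"
proof -
  define a b where "a = sqrt y1" and "b = sqrt y2"
  have sm: "sqrt m > 0" using m by simp
  have a: "a \<ge> sqrt m" "b \<ge> sqrt m" using y by (auto simp: a_def b_def)
  have ap: "a > 0" "b > 0" using a sm by linarith+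
  have y1: "y1 = a^2" and y2: "y2 = b^2" using y m by (auto simp: a_def b_def)
  have "(a + b) * a * b \<noteq> 0" using ap by simp
  then have "1 / a - 1 / b = (b^2 - a^2) / ((a + b) * a * b)"
    by (subst eq_divide_eq) (auto simp: algebra_simps power2_eq_square)
  then have "\<bar>1 / a - 1 / b\<bar> = \<bar>a^2 - b^2\<bar> / ((a + b) * a * b)" using ap
    by (simp add: abs_minus_commute)
  also have "\<dots> \<le> \<bar>a^2 - b^2\<bar> / (2 * m * sqrt m)"
  proof (rule divide_left_mono)
    have "(a + b) * (a * b) \<ge> (2 * sqrt m) * (sqrt m * sqrt m)"
      using a sm ap by (intro mult_mono) (auto intro!: mult_mono)
    then show "2 * m * sqrt m \<le> (a + b) * a * b" using m by (simp add: ac_simps)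
    show "0 < (a + b) * a * b * (2 * m * sqrt m)" using ap m by simp
  qed simp
  moreover have "sqrt y1 = a" "sqrt y2 = b" by (simp_all add: a_def b_def)
  ultimately show ?thesis by (simp only: y1 y2)
qed

lemma ln_lip:
  fixes a b \<mu> :: real
  assumes "\<mu> > 0" "a \<ge> \<mu>" "b \<ge> \<mu>"
  shows "\<bar>ln a - ln b\<bar> \<le> \<bar>a - b\<bar> / \<mu>"
proof -
  have "ln a - ln b \<le> (a - b) / b" if "a \<ge> \<mu>" "b \<ge> \<mu>" for a b
  proof -
    have "ln (a / b) \<le> a / b - 1" using that assms(1) by (intro ln_le_minus_one) auto
    then show ?thesis using that assms(1) by (simp add: ln_div field_simps)
  qed
  moreover have "(a - b) / b \<le> \<bar>a - b\<bar> / \<mu>" if "a \<ge> \<mu>" "b \<ge> \<mu>" for a b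
  proof -
    have "(a - b) / b \<le> \<bar>a - b\<bar> / b" using that assms(1) by (simp add: divide_right_mono)
    also have "\<dots> \<le> \<bar>a - b\<bar> / \<mu>" using that assms(1) by (intro divide_left_mono) auto
    finally show ?thesis .
  qed
  ultimately have "ln a - ln b \<le> \<bar>a - b\<bar> / \<mu>" "ln b - ln a \<le> \<bar>b - a\<bar> / \<mu>"
    using assms by (meson order_trans)+
  then show ?thesis by (simp add: abs_minus_commute)
qed

lemma inv_sqrt_2nd:
  fixes D y m Mx :: real
  assumes m: "m > 0" and D: "m \<le> D" "D \<le> Mx" and y: "m \<le> y" "y \<le> Mx"
  shows "\<bar>1 / sqrt y - 1 / sqrt D - (D - y) / (2 * D * sqrt D)\<bar> \<le> (3 * sqrt Mx / (8 * m^3)) * (D - y)^2"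
proof -
  define a b where "a = sqrt D" and "b = sqrt y"
  have sm: "sqrt m > 0" using m by simp
  have a: "a \<ge> sqrt m" "b \<ge> sqrt m" "a \<le> sqrt Mx" "b \<le> sqrt Mx" using D y by (auto simp: a_def b_def)
  have ap: "a > 0" "b > 0" using a sm by linarith+
  have D2: "D = a^2" and y2: "y = b^2" using D y m by (auto simp: a_def b_def)
  have id: "1/b - 1/a - (a^2-b^2)/(2*a^2*a) = (a-b)^2*(2*a+b)/(2*a^3*b)"
    using ap by (simp add: diff_frac_eq frac_eq_eq) algebra
  have id2: "(a-b)^2 = (a^2-b^2)^2 / (a+b)^2"
    using ap by (simp add: eq_divide_eq) algebra
  have num: "2 * a + b \<le> 3 * sqrt Mx" using a by linarith
  have den: "8 * m^3 \<le> 2 * a^3 * b * (a + b)^2"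
  proof -
    have "2 * sqrt m \<le> a + b" using a by linarith
    then have h3: "(2 * sqrt m)^2 \<le> (a + b)^2" using sm by (intro power_mono) auto
    have h1: "(sqrt m)^3 \<le> a^3" by (rule power_mono) (use a sm in auto)
    have "(sqrt m)^3 * sqrt m \<le> a^3 * b" by (rule mult_mono[OF h1 a(2)]) (use sm ap in auto)
    then have "(sqrt m)^3 * sqrt m * (2 * sqrt m)^2 \<le> a^3 * b * (a + b)^2"
      by (rule mult_mono[OF _ h3]) (use sm ap in auto)
    moreover have "(sqrt m)^3 * sqrt m * (2 * sqrt m)^2 = 4 * m^3"
    proof -
      have "(sqrt m)^3 * sqrt m * (2 * sqrt m)^2 = 4 * ((sqrt m)^2)^3" by algebra
      also have "(sqrt m)^2 = m" using m by simp
      finally show ?thesis .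
    qed
    ultimately have "4 * m^3 \<le> a^3 * b * (a + b)^2" by linarith
    moreover have "2 * a^3 * b * (a + b)^2 = 2 * (a^3 * b * (a + b)^2)" by (simp add: mult.assoc)
    ultimately show ?thesis by linarith
  qed
  have "(a-b)^2*(2*a+b)/(2*a^3*b) = (a^2-b^2)^2/(a+b)^2*(2*a+b)/(2*a^3*b)"
    by (simp only: id2)
  also have "\<dots> = (a^2-b^2)^2 * ((2*a+b) / (2*a^3*b*(a+b)^2))"
    by simp
  also have "\<dots> \<le> (a^2-b^2)^2 * (3 * sqrt Mx / (8 * m^3))"
    by (rule mult_left_mono[OF frac_le[OF _ num _ den]]) (use m D in auto)
  finally have "\<bar>1 / b - 1 / a - (a^2 - b^2) / (2 * a^2 * a)\<bar> \<le> (3 * sqrt Mx / (8 * m^3)) * (a^2 - b^2)^2"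
    using id ap by (simp add: mult.commute)
  moreover have "sqrt D = a" "sqrt y = b" by (simp_all add: a_def b_def)
  ultimately show ?thesis by (simp only: D2 y2)
qed


lemma powr32: "D > 0 \<Longrightarrow> D powr (3/2) = D * sqrt D"
proof -
  assume D: "D > (0::real)"
  have "D powr (3/2) = D powr (1 + 1/2)" by simp
  also have "\<dots> = D powr 1 * D powr (1/2)" by (rule powr_add)
  also have "\<dots> = D * D powr (1/2)" using D by simp
  also have "D powr (1/2) = sqrt D" using D by (simp add: powr_half_sqrt)
  finally show ?thesis .
qed

lemma abs_ln_bound: "0 < (a::real) \<Longrightarrow> a \<le> x \<Longrightarrow> x \<le> b \<Longrightarrow> \<bar>ln x\<bar> \<le> \<bar>ln a\<bar> + \<bar>ln b\<bar>"
proof -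
  assume "0 < a" "a \<le> x" "x \<le> b"
  moreover have "ln a \<le> ln x" using \<open>0 < a\<close> \<open>a \<le> x\<close> by (intro ln_mono)
  moreover have "ln x \<le> ln b" using \<open>0 < a\<close> \<open>a \<le> x\<close> \<open>x \<le> b\<close> by (intro ln_mono) auto
  ultimately show ?thesis by (smt (verit))
qed

lemma abs_lin_bound: "(L::real) = 3 / 2 * a + q \<Longrightarrow> \<bar>a\<bar> \<le> B \<Longrightarrow> \<bar>L\<bar> \<le> 3 / 2 * B + \<bar>q\<bar>"
proof -
  assume L: "L = 3 / 2 * a + q" and a: "\<bar>a\<bar> \<le> B"
  have "\<bar>L\<bar> \<le> \<bar>3 / 2 * a\<bar> + \<bar>q\<bar>" unfolding L by (rule abs_triangle_ineq)
  moreover have "\<bar>3 / 2 * a\<bar> = 3 / 2 * \<bar>a\<bar>" by (simp add: abs_mult)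
  ultimately show ?thesis using a by linarith
qed

lemma inversion:
  fixes \<theta> d0 d1 s0 S1 KR :: real
  assumes th: "\<theta> \<noteq> 0" and d0: "d0 > 0" and s0: "s0 > 0" and KR: "KR \<ge> 0"
  shows "\<exists>K. \<forall>\<tau> s D R. \<tau> \<ge> 1 \<longrightarrow> s0 \<le> s \<longrightarrow> s \<le> S1 \<longrightarrow> d0 \<le> D \<longrightarrow> D \<le> d1 \<longrightarrow> \<bar>R\<bar> \<le> KR / \<tau> \<longrightarrow>
     \<theta>^2 / s^2 = D + (2 / \<tau>) * (ln (s^3 / (\<theta>^2 * sqrt (2 * pi))) + R) \<longrightarrow>
     \<bar>s - (\<bar>\<theta>\<bar> / sqrt D + \<bar>\<theta>\<bar> * ln (D powr (3/2) * sqrt (2 * pi) / \<bar>\<theta>\<bar>) / D powr (3/2) * (1 / \<tau>))\<bar> \<le> K / \<tau>^2"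
proof -
  define c where "c = \<theta>^2 * sqrt (2 * pi)"
  define B1 where "B1 = 3 * (\<bar>ln s0\<bar> + \<bar>ln S1\<bar>) + \<bar>ln c\<bar>"
  define m where "m = min d0 (\<theta>^2 / S1^2)"
  define K2 where "K2 = \<bar>\<theta>\<bar> * (2 * (B1 + KR)) / (2 * m * sqrt m)"
  define \<mu> where "\<mu> = min s0 (\<bar>\<theta>\<bar> / sqrt d1)"
  define K4 where "K4 = 3 * K2 / \<mu> + KR"
  define B\<Lambda> where "B\<Lambda> = 3 / 2 * (\<bar>ln d0\<bar> + \<bar>ln d1\<bar>) + \<bar>ln (sqrt (2 * pi) / \<bar>\<theta>\<bar>)\<bar>"
  define Mx where "Mx = max d1 (\<theta>^2 / s0^2)"
  define K5 where "K5 = 3 * sqrt Mx / (8 * m^3)"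
  define K where "K = \<bar>\<theta>\<bar> * K5 * (2 * (B\<Lambda> + K4))^2 + \<bar>\<theta>\<bar> * K4 / (d0 * sqrt d0)"
  show ?thesis
  proof (intro exI[of _ K] allI impI)
    fix \<tau> s D R :: real
    assume tau: "\<tau> \<ge> 1" and s: "s0 \<le> s" "s \<le> S1" and D: "d0 \<le> D" "D \<le> d1" and R: "\<bar>R\<bar> \<le> KR / \<tau>"
      and eq: "\<theta>^2 / s^2 = D + (2 / \<tau>) * (ln (s^3 / (\<theta>^2 * sqrt (2 * pi))) + R)"
    have tp: "\<tau> > 0" using tau by simp
    have sp: "s > 0" using s s0 by simp
    have Dp: "D > 0" using D d0 by simp
    have S1p: "S1 > 0" using s sp by simp
    have d1p: "d1 > 0" using D Dp by simp
    have cp: "c > 0" using th by (simp add: c_def)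
    have mp: "m > 0" using d0 th S1p by (simp add: m_def)
    have \<mu>p: "\<mu> > 0" using s0 th d1p by (simp add: \<mu>_def)
    have "KR / \<tau> \<le> KR / 1" using KR tau by (intro divide_left_mono) auto
    then have R1: "\<bar>R\<bar> \<le> KR" using R by simp
    define ls where "ls = ln (s^3 / c)"
    have ls: "ls = 3 * ln s - ln c" using sp cp by (simp add: ls_def ln_div ln_realpow)
    have lnsb: "\<bar>ln s\<bar> \<le> \<bar>ln s0\<bar> + \<bar>ln S1\<bar>" by (rule abs_ln_bound[OF s0 s])
    have lsb: "\<bar>ls\<bar> \<le> B1" unfolding ls B1_def using lnsb by (smt (verit))
    define y where "y = \<theta>^2 / s^2"
    have yD: "y - D = (2 / \<tau>) * (ls + R)" using eq by (simp add: y_def ls_def c_def)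
    have yD_b: "\<bar>y - D\<bar> \<le> 2 * (B1 + KR) / \<tau>"
    proof -
      have "\<bar>y - D\<bar> = \<bar>2 / \<tau>\<bar> * \<bar>ls + R\<bar>" by (simp only: yD abs_mult)
      also have "\<dots> = 2 / \<tau> * \<bar>ls + R\<bar>" using tp by simp
      also have "\<dots> \<le> (2 / \<tau>) * (B1 + KR)" using lsb R1 tp by (intro mult_left_mono) auto
      finally show ?thesis by simp
    qed
    have ym: "y \<ge> m"
    proof -
      have "s^2 \<le> S1^2" using s sp by (intro power_mono) auto
      then have "\<theta>^2 / S1^2 \<le> \<theta>^2 / s^2" using sp S1p by (intro divide_left_mono) auto
      then show ?thesis by (simp add: m_def y_def)
    qed
    have Dm: "D \<ge> m" using D by (simp add: m_def)
    have sy: "s = \<bar>\<theta>\<bar> / sqrt y" using sp th by (simp add: y_def real_sqrt_divide)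
    define sst where "sst = \<bar>\<theta>\<bar> / sqrt D"
    have s_sst: "\<bar>s - sst\<bar> \<le> K2 / \<tau>"
    proof -
      have "\<bar>s - sst\<bar> = \<bar>\<theta>\<bar> * \<bar>1 / sqrt y - 1 / sqrt D\<bar>"
        by (simp add: sy sst_def abs_mult[symmetric] right_diff_distrib)
      also have "\<dots> \<le> \<bar>\<theta>\<bar> * (\<bar>y - D\<bar> / (2 * m * sqrt m))"
        by (intro mult_left_mono inv_sqrt_lip mp ym Dm) simp
      also have "\<dots> \<le> \<bar>\<theta>\<bar> * ((2 * (B1 + KR) / \<tau>) / (2 * m * sqrt m))"
        using yD_b mp by (intro mult_left_mono divide_right_mono) auto
      also have "\<dots> = K2 / \<tau>" by (simp add: K2_def)
      finally show ?thesis .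
    qed
    have sst_mu: "sst \<ge> \<mu>"
    proof -
      have "sqrt D \<le> sqrt d1" using D by simp
      then have "\<bar>\<theta>\<bar> / sqrt d1 \<le> \<bar>\<theta>\<bar> / sqrt D" using Dp by (intro divide_left_mono) auto
      then show ?thesis by (simp add: \<mu>_def sst_def)
    qed
    have s_mu: "s \<ge> \<mu>" using s by (simp add: \<mu>_def)
    have lnd: "\<bar>ln s - ln sst\<bar> \<le> K2 / (\<mu> * \<tau>)"
    proof -
      have "\<bar>ln s - ln sst\<bar> \<le> \<bar>s - sst\<bar> / \<mu>" by (rule ln_lip[OF \<mu>p s_mu sst_mu])
      also have "\<dots> \<le> (K2 / \<tau>) / \<mu>" using s_sst \<mu>p by (intro divide_right_mono) auto
      finally show ?thesis by (simp add: mult.commute)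
    qed
    define \<Lambda> where "\<Lambda> = ln (D powr (3/2) * sqrt (2 * pi) / \<bar>\<theta>\<bar>)"
    have sstp: "sst > 0" using th Dp by (simp add: sst_def)
    have lss: "ln (sst^3 / c) = - \<Lambda>"
    proof -
      have "sst^3 / c = 1 / (D powr (3/2) * sqrt (2 * pi) / \<bar>\<theta>\<bar>)"
        using th Dp by (simp add: sst_def c_def powr32 power3_eq_cube power2_eq_square field_simps)
      then show ?thesis using th Dp by (simp add: \<Lambda>_def ln_div)
    qed
    define e where "e = ls + \<Lambda> + R"
    have e_alt: "e = 3 * (ln s - ln sst) + R"
      using lss sstp cp by (simp add: e_def ls ln_div ln_realpow)
    have eb: "\<bar>e\<bar> \<le> K4 / \<tau>"
    proof -
      have "\<bar>e\<bar> \<le> 3 * \<bar>ln s - ln sst\<bar> + \<bar>R\<bar>" unfolding e_alt by (smt (verit))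
      also have "\<dots> \<le> 3 * (K2 / (\<mu> * \<tau>)) + KR / \<tau>" using lnd R by (smt (verit))
      also have "\<dots> = K4 / \<tau>" by (simp add: K4_def add_divide_distrib)
      finally show ?thesis .
    qed
    have eb1: "\<bar>e\<bar> \<le> K4"
    proof -
      have "K4 \<ge> 0" using eb tp by (metis abs_ge_zero order_trans zero_le_divide_iff less_eq_real_def not_le)
      then have "K4 / \<tau> \<le> K4 / 1" using tau by (intro divide_left_mono) auto
      then show ?thesis using eb by simp
    qed
    define x where "x = D - y"
    have xe: "x = (2 / \<tau>) * (\<Lambda> - e)"
    proof -
      have "\<Lambda> - e = - (ls + R)" by (simp add: e_def)
      then have "(2 / \<tau>) * (\<Lambda> - e) = - ((2 / \<tau>) * (ls + R))" by (simp only: mult_minus_right)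
      then show ?thesis using yD unfolding x_def by linarith
    qed
    have \<Lambda>b: "\<bar>\<Lambda>\<bar> \<le> B\<Lambda>"
    proof -
      have "\<Lambda> = 3 / 2 * ln D + ln (sqrt (2 * pi) / \<bar>\<theta>\<bar>)"
        using Dp th by (simp add: \<Lambda>_def ln_div ln_mult ln_powr)
      moreover have "\<bar>ln D\<bar> \<le> \<bar>ln d0\<bar> + \<bar>ln d1\<bar>" by (rule abs_ln_bound[OF d0 D])
      ultimately show ?thesis unfolding B\<Lambda>_def by (rule abs_lin_bound)
    qed
    have xb: "\<bar>x\<bar> \<le> 2 * (B\<Lambda> + K4) / \<tau>"
    proof -
      have "\<bar>x\<bar> = \<bar>2 / \<tau>\<bar> * \<bar>\<Lambda> - e\<bar>" by (simp only: xe abs_mult)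
      also have "\<dots> = 2 / \<tau> * \<bar>\<Lambda> - e\<bar>" using tp by simp
      also have "\<dots> \<le> (2 / \<tau>) * (B\<Lambda> + K4)" using \<Lambda>b eb1 tp by (intro mult_left_mono) auto
      finally show ?thesis by simp
    qed
    have yM: "y \<le> Mx"
    proof -
      have "s0^2 \<le> s^2" using s s0 by (intro power_mono) auto
      then have "\<theta>^2 / s^2 \<le> \<theta>^2 / s0^2" using s0 sp by (intro divide_left_mono) auto
      then show ?thesis by (simp add: Mx_def y_def)
    qed
    have DM: "D \<le> Mx" using D by (simp add: Mx_def)
    have snd: "\<bar>1 / sqrt y - 1 / sqrt D - x / (2 * D * sqrt D)\<bar> \<le> K5 * x^2"
      unfolding K5_def x_def by (rule inv_sqrt_2nd[OF mp Dm DM ym yM])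
    have target: "\<bar>\<theta>\<bar> * ln (D powr (3/2) * sqrt (2 * pi) / \<bar>\<theta>\<bar>) / D powr (3/2) * (1 / \<tau>) = \<bar>\<theta>\<bar> * \<Lambda> / (D * sqrt D * \<tau>)"
      using Dp by (simp add: \<Lambda>_def powr32)
    have split: "s - (sst + \<bar>\<theta>\<bar> * \<Lambda> / (D * sqrt D * \<tau>))
       = \<bar>\<theta>\<bar> * (1 / sqrt y - 1 / sqrt D - x / (2 * D * sqrt D)) - \<bar>\<theta>\<bar> * e / (D * sqrt D * \<tau>)"
      using Dp tp by (simp add: sy sst_def xe field_simps)
    have "\<bar>s - (sst + \<bar>\<theta>\<bar> * \<Lambda> / (D * sqrt D * \<tau>))\<bar>
       \<le> \<bar>\<theta>\<bar> * \<bar>1 / sqrt y - 1 / sqrt D - x / (2 * D * sqrt D)\<bar> + \<bar>\<theta>\<bar> * \<bar>e\<bar> / (D * sqrt D * \<tau>)"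
    proof -
      let ?X = "1 / sqrt y - 1 / sqrt D - x / (2 * D * sqrt D)"
      have "\<bar>\<bar>\<theta>\<bar> * ?X - \<bar>\<theta>\<bar> * e / (D * sqrt D * \<tau>)\<bar> \<le> \<bar>\<bar>\<theta>\<bar> * ?X\<bar> + \<bar>\<bar>\<theta>\<bar> * e / (D * sqrt D * \<tau>)\<bar>"
        by (rule abs_triangle_ineq4)
      moreover have "\<bar>\<bar>\<theta>\<bar> * ?X\<bar> = \<bar>\<theta>\<bar> * \<bar>?X\<bar>" by (simp add: abs_mult)
      moreover have "\<bar>\<bar>\<theta>\<bar> * e / (D * sqrt D * \<tau>)\<bar> = \<bar>\<theta>\<bar> * \<bar>e\<bar> / (D * sqrt D * \<tau>)"
        using Dp tp by (simp add: abs_mult abs_divide)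
      ultimately show ?thesis unfolding split by linarith
    qed
    also have "\<dots> \<le> \<bar>\<theta>\<bar> * (K5 * (2 * (B\<Lambda> + K4) / \<tau>)^2) + \<bar>\<theta>\<bar> * (K4 / \<tau>) / (d0 * sqrt d0 * \<tau>)"
    proof (rule add_mono)
      have "x^2 \<le> (2 * (B\<Lambda> + K4) / \<tau>)^2"
        using xb by (metis abs_ge_zero power2_abs power_mono)
      then have "K5 * x^2 \<le> K5 * (2 * (B\<Lambda> + K4) / \<tau>)^2"
        using mp DM Dp by (intro mult_left_mono) (auto simp: K5_def intro!: divide_nonneg_pos)
      then show "\<bar>\<theta>\<bar> * \<bar>1 / sqrt y - 1 / sqrt D - x / (2 * D * sqrt D)\<bar> \<le> \<bar>\<theta>\<bar> * (K5 * (2 * (B\<Lambda> + K4) / \<tau>)^2)"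
        using snd by (intro mult_left_mono) auto
      have "d0 * sqrt d0 * \<tau> \<le> D * sqrt D * \<tau>"
        using D d0 tp by (intro mult_right_mono mult_mono) auto
      moreover have "d0 * sqrt d0 * \<tau> > 0" using d0 tp by simp
      moreover have "\<bar>\<theta>\<bar> * \<bar>e\<bar> \<le> \<bar>\<theta>\<bar> * (K4 / \<tau>)" using eb by (intro mult_left_mono) auto
      moreover have "0 \<le> K4 / \<tau>" using eb abs_ge_zero[of e] by linarith
      then have "0 \<le> \<bar>\<theta>\<bar> * (K4 / \<tau>)" by (intro mult_nonneg_nonneg) auto
      ultimately show "\<bar>\<theta>\<bar> * \<bar>e\<bar> / (D * sqrt D * \<tau>) \<le> \<bar>\<theta>\<bar> * (K4 / \<tau>) / (d0 * sqrt d0 * \<tau>)"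
        by (intro frac_le) auto
    qed
    also have "\<dots> = K / \<tau>^2"
      using tp d0 by (simp add: K_def power2_eq_square field_simps)
    finally show "\<bar>s - (\<bar>\<theta>\<bar> / sqrt D + \<bar>\<theta>\<bar> * ln (D powr (3/2) * sqrt (2 * pi) / \<bar>\<theta>\<bar>) / D powr (3/2) * (1 / \<tau>))\<bar> \<le> K / \<tau>^2"
      unfolding target sst_def[symmetric] .
  qed
qed


lemma A1: "filterlim (\<lambda>t::real. ln (1 / t)) at_top (at_right 0)" by real_asymp
lemma A2: "((\<lambda>t::real. ln (ln (1 / t)) / ln (1 / t)) \<longlongrightarrow> 0) (at_right 0)" by real_asymp
lemma A3: "((\<lambda>t::real. sqrt (t * ln (1 / t)) * ln (1 / t)) \<longlongrightarrow> 0) (at_right 0)" by real_asymp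
lemma A4: "((\<lambda>t::real. t * ln (1 / t)) \<longlongrightarrow> 0) (at_right 0)" by real_asymp
lemma A6: "(\<lambda>t::real. 1 / ln (1 / t) ^ 2) \<in> o[at_right 0](\<lambda>t. 1 / ln (1 / t))" by real_asymp

lemma Qf_pos: assumes k: "k \<noteq> 0" and v: "v > 0" shows "Qf k v > 0"
proof -
  have "(\<lambda>u. - Qf k u) (v / 2) \<le> 0"
  proof (rule cmp_lemma[where h="\<lambda>u. - Qf k u" and h'="\<lambda>u. - std_normal_density (- k / u + u / 2)"])
    show "v / 2 > 0" using v by simp
    fix u :: real assume "0 < u" "u \<le> v / 2"
    then have "(Qf k has_real_derivative std_normal_density (- k / u + u / 2)) (at u)"
      by (intro Qf_deriv) simp
    then show "((\<lambda>u. - Qf k u) has_real_derivative - std_normal_density (- k / u + u / 2)) (at u) \<and>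
      - std_normal_density (- k / u + u / 2) \<le> 0"
      by (auto intro: DERIV_minus)
  next
    show "((\<lambda>u. - Qf k u) \<longlongrightarrow> 0) (at_right 0)" using tendsto_minus[OF Qf_lim0[OF k]] by simp
  qed
  moreover have "Qf k (v / 2) < Qf k v" using v by (intro Qf_strict_mono) auto
  ultimately show ?thesis by simp
qed


lemma pert:
  fixes t \<tau> k s I D \<theta> d0 d1 S1 s0 :: real
  assumes t: "0 < t" "t < 1" and tau: "\<tau> = ln (1 / t)" and k: "k = \<theta> * sqrt (t * \<tau>)"
    and th: "\<theta> \<noteq> 0" and sp: "s > 0" and Ip: "I > 0" and Q: "Qf k (s * sqrt t) = I"
    and D: "D = 2 * (ln I / ln t - ln \<tau> / \<tau>) - 1" and Db: "d0 \<le> D" "D \<le> d1" and d0: "d0 > 0"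
    and S1: "S1 = \<bar>\<theta>\<bar> * sqrt (2 / d0)"
    and s0: "s0 = min 1 (\<bar>\<theta>\<bar> / sqrt (d1 + 2 * (\<bar>ln (\<theta>^2 * sqrt (2 * pi))\<bar> + 1)))"
    and tau1: "\<tau> \<ge> 8"
    and tau2: "(2 / \<tau>) * (\<bar>ln (S1^3 / (\<theta>^2 * sqrt (2 * pi)))\<bar> + 1 + ln 2) < d0 / 2"
    and tau3: "3 * S1^2 / (\<theta>^2 * \<tau>) \<le> 2 / 5"
    and kt: "\<bar>k\<bar> * \<tau> \<le> 2"
    and St: "S1^2 * t * \<tau> \<le> 8"
  shows "s0 \<le> s \<and> s \<le> S1 \<and> \<bar>k / 2 + ln (I / Hf k (s * sqrt t))\<bar> \<le> (2 + 6 * S1^2 / \<theta>^2) / \<tau>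
     \<and> \<theta>^2 / s^2 = D + (2 / \<tau>) * (ln (s^3 / (\<theta>^2 * sqrt (2 * pi))) + (k / 2 + ln (I / Hf k (s * sqrt t))))"
proof -
  define c where "c = \<theta>^2 * sqrt (2 * pi)"
  have cp: "c > 0" using th by (simp add: c_def)
  have tp: "\<tau> > 0" using tau1 by simp
  have lt: "ln t < 0" using t by simp
  have kn: "k \<noteq> 0" using k th t tp by simp
  have k2: "k^2 = \<theta>^2 * t * \<tau>" using t tp k by (simp add: power_mult_distrib)
  have kabs: "\<bar>k / 2\<bar> \<le> 1 / \<tau>" using kt tp by (simp add: field_simps)
  have k1: "\<bar>k / 2\<bar> \<le> 1"
  proof -
    have "1 / \<tau> \<le> 1 / 1" using tau1 by (intro divide_left_mono) auto
    then show ?thesis using kabs by linarith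
  qed
  have k1': "- 1 \<le> k / 2" "k / 2 \<le> 1" using k1 by (simp_all add: abs_le_iff)
  have kabs': "- (1 / \<tau>) \<le> k / 2" "k / 2 \<le> 1 / \<tau>" using kabs by (simp_all add: abs_le_iff)
  have KI: "\<theta>^2 / s^2 = D + (2 / \<tau>) * (ln (s^3 / c) + k / 2 + ln (I / Hf k (s * sqrt t)))"
    unfolding D c_def by (rule key_identity[OF t sp th tau k Ip])
  define \<rho> where "\<rho> = I / Hf k (s * sqrt t)"
  have vp: "s * sqrt t > 0" using sp t by simp
  have Hp: "Hf k (s * sqrt t) > 0" by (rule Hf_pos[OF kn vp])
  have \<rho>p: "\<rho> > 0" using Ip Hp by (simp add: \<rho>_def)
  have \<rho>1: "\<rho> \<le> 1" using Qf_upper[OF kn vp] Q Hp by (simp add: \<rho>_def)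
  have ln\<rho>: "ln \<rho> \<le> 0" using \<rho>p \<rho>1 by simp
  define A where "A = d1 + 2 * (\<bar>ln c\<bar> + 1)"
  have d1: "d1 \<ge> d0" using Db by simp
  have Ap: "A > 0" using d1 d0 by (simp add: A_def)
  have slow: "s0 \<le> s"
  proof (cases "s \<ge> 1")
    case True
    then show ?thesis by (simp add: s0)
  next
    case False
    then have ls0: "ln s \<le> 0" using sp by simp
    have "ln (s^3 / c) = 3 * ln s - ln c" using sp cp by (simp add: ln_div ln_realpow)
    then have "ln (s^3 / c) \<le> \<bar>ln c\<bar>" using ls0 abs_ge_minus_self[of "ln c"] by linarith
    then have "ln (s^3 / c) + k / 2 + ln \<rho> \<le> \<bar>ln c\<bar> + 1" using k1' ln\<rho> by linarith
    then have "(2 / \<tau>) * (ln (s^3 / c) + k / 2 + ln \<rho>) \<le> (2 / \<tau>) * (\<bar>ln c\<bar> + 1)"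
      using tp by (intro mult_left_mono) auto
    also have "\<dots> \<le> 2 * (\<bar>ln c\<bar> + 1)"
    proof -
      have "2 / \<tau> \<le> 2 / 1" using tau1 by (intro divide_left_mono) auto
      then have "2 / \<tau> \<le> 2" by simp
      then show ?thesis by (rule mult_right_mono) simp
    qed
    finally have "\<theta>^2 / s^2 \<le> A" using KI Db by (simp add: A_def \<rho>_def)
    then have "\<theta>^2 / A \<le> s^2" using sp Ap by (simp add: field_simps)
    then have "sqrt (\<theta>^2 / A) \<le> sqrt (s^2)" by (rule real_sqrt_le_mono)
    then have "\<bar>\<theta>\<bar> / sqrt A \<le> s" using sp Ap by (simp add: real_sqrt_divide)
    then show ?thesis by (simp add: s0 A_def c_def)
  qed
  have S1p: "S1 > 0" using th d0 by (simp add: S1)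
  have S1sq: "\<theta>^2 / S1^2 = d0 / 2"
    using th d0 by (simp add: S1 power_mult_distrib field_simps)
  have supp: "s \<le> S1"
  proof (rule ccontr)
    assume "\<not> s \<le> S1"
    then have sS: "S1 < s" by simp
    define Q1 where "Q1 = Qf k (S1 * sqrt t)"
    have v1: "S1 * sqrt t > 0" using S1p t by simp
    have "Q1 < I" unfolding Q1_def Q[symmetric] using sS t v1 by (intro Qf_strict_mono) auto
    have Q1p: "Q1 > 0" unfolding Q1_def by (rule Qf_pos[OF kn v1])
    have "ln Q1 < ln I" using \<open>Q1 < I\<close> Q1p by simp
    then have "ln I / ln t < ln Q1 / ln t" using lt by (simp add: divide_strict_right_mono_neg)
    define D1 where "D1 = 2 * (ln Q1 / ln t - ln \<tau> / \<tau>) - 1"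
    have DD1: "D < D1" unfolding D D1_def using \<open>ln I / ln t < ln Q1 / ln t\<close> by simp
    have KI1: "\<theta>^2 / S1^2 = D1 + (2 / \<tau>) * (ln (S1^3 / c) + k / 2 + ln (Q1 / Hf k (S1 * sqrt t)))"
      unfolding D1_def c_def by (rule key_identity[OF t S1p th tau k Q1p])
    define \<rho>1 where "\<rho>1 = Q1 / Hf k (S1 * sqrt t)"
    have H1p: "Hf k (S1 * sqrt t) > 0" by (rule Hf_pos[OF kn v1])
    have low1: "exp (- ((S1 * sqrt t)^2) / 8) * (1 - 3 * (S1 * sqrt t)^2 / k^2) \<le> \<rho>1"
      using Qf_lower[OF kn v1] H1p by (simp add: \<rho>1_def Q1_def field_simps)
    have e1: "(S1 * sqrt t)^2 = S1^2 * t" using t by (simp add: power_mult_distrib)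
    have e2: "3 * (S1 * sqrt t)^2 / k^2 = 3 * S1^2 / (\<theta>^2 * \<tau>)"
      unfolding e1 k2 using t th tp by (simp add: field_simps)
    have "S1^2 * t \<le> 1"
    proof -
      have "S1^2 * t * 8 \<le> S1^2 * t * \<tau>" using tau1 t by (intro mult_left_mono) auto
      then show ?thesis using St by linarith
    qed
    then have "exp (- ((S1 * sqrt t)^2) / 8) \<ge> 7 / 8"
    proof -
      have "1 + (- ((S1 * sqrt t)^2) / 8) \<le> exp (- ((S1 * sqrt t)^2) / 8)" by (rule exp_ge_add_one_self)
      then show ?thesis using \<open>S1^2 * t \<le> 1\<close> unfolding e1 by linarith
    qed
    moreover have "1 - 3 * (S1 * sqrt t)^2 / k^2 \<ge> 3 / 5" unfolding e2 using tau3 by linarith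
    ultimately have "exp (- ((S1 * sqrt t)^2) / 8) * (1 - 3 * (S1 * sqrt t)^2 / k^2) \<ge> 7 / 8 * (3 / 5)"
      by (intro mult_mono) auto
    then have "\<rho>1 \<ge> 1 / 2" using low1 by linarith
    then have "ln \<rho>1 \<ge> ln (1 / 2)" by (intro ln_mono) auto
    then have lr1: "ln \<rho>1 \<ge> - ln 2" by (simp add: ln_div)
    define B where "B = \<bar>ln (S1^3 / c)\<bar> + 1 + ln 2"
    have "ln (S1^3 / c) + k / 2 + ln \<rho>1 \<ge> - B"
      using lr1 k1' abs_ge_minus_self[of "ln (S1^3 / c)"] unfolding B_def by linarith
    then have T1: "(2 / \<tau>) * (ln (S1^3 / c) + k / 2 + ln \<rho>1) \<ge> (2 / \<tau>) * (- B)"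
      using tp by (intro mult_left_mono) auto
    have T2: "(2 / \<tau>) * (- B) = - ((2 / \<tau>) * B)" by simp
    have T3: "(2 / \<tau>) * B < d0 / 2" using tau2 by (simp add: B_def c_def)
    have T4: "d0 / 2 = D1 + (2 / \<tau>) * (ln (S1^3 / c) + k / 2 + ln \<rho>1)"
      unfolding \<rho>1_def using KI1 S1sq by linarith
    have lin: "\<And>X Y D1 d0::real. X \<ge> - Y \<Longrightarrow> Y < d0 / 2 \<Longrightarrow> d0 / 2 = D1 + X \<Longrightarrow> D1 < d0" by linarith
    have "D1 < d0" by (rule lin[OF T1[unfolded T2] T3 T4])
    then show False using DD1 Db by linarith
  qed
  have Rb: "\<bar>k / 2 + ln \<rho>\<bar> \<le> (2 + 6 * S1^2 / \<theta>^2) / \<tau>"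
  proof -
    have low: "exp (- ((s * sqrt t)^2) / 8) * (1 - 3 * (s * sqrt t)^2 / k^2) \<le> \<rho>"
      using Qf_lower[OF kn vp] Hp Q by (simp add: \<rho>_def field_simps)
    have e1: "(s * sqrt t)^2 = s^2 * t" using t by (simp add: power_mult_distrib)
    have e2: "3 * (s * sqrt t)^2 / k^2 = 3 * s^2 / (\<theta>^2 * \<tau>)"
      unfolding e1 k2 using t th tp by (simp add: field_simps)
    have ss: "s^2 \<le> S1^2" using supp sp by (intro power_mono) auto
    have z1: "3 * s^2 / (\<theta>^2 * \<tau>) \<le> 3 * S1^2 / (\<theta>^2 * \<tau>)"
      using ss th tp by (intro divide_right_mono) auto
    have z0: "0 \<le> 3 * s^2 / (\<theta>^2 * \<tau>)" using tp by simp
    have zh: "3 * s^2 / (\<theta>^2 * \<tau>) \<le> 1 / 2" using z1 tau3 by linarith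
    have low': "exp (- (s^2 * t) / 8) * (1 - 3 * s^2 / (\<theta>^2 * \<tau>)) \<le> \<rho>"
      using low unfolding e2 unfolding e1 .
    have zpos: "1 - 3 * s^2 / (\<theta>^2 * \<tau>) > 0" using zh by linarith
    have "ln (exp (- (s^2 * t) / 8) * (1 - 3 * s^2 / (\<theta>^2 * \<tau>))) \<le> ln \<rho>"
      using low' zpos by (intro ln_mono) auto
    moreover have "ln (exp (- (s^2 * t) / 8) * (1 - 3 * s^2 / (\<theta>^2 * \<tau>)))
        = - (s^2 * t) / 8 + ln (1 - 3 * s^2 / (\<theta>^2 * \<tau>))"
      by (subst ln_mult) (use zpos in auto)
    moreover have "ln (1 - 3 * s^2 / (\<theta>^2 * \<tau>)) \<ge> - (3 * s^2 / (\<theta>^2 * \<tau>)) - 2 * (3 * s^2 / (\<theta>^2 * \<tau>))^2"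
      by (rule ln_one_minus_pos_lower_bound[OF z0 zh])
    moreover have "2 * (3 * s^2 / (\<theta>^2 * \<tau>))^2 \<le> 3 * s^2 / (\<theta>^2 * \<tau>)"
    proof -
      have "(3 * s^2 / (\<theta>^2 * \<tau>)) * (2 * (3 * s^2 / (\<theta>^2 * \<tau>))) \<le> (3 * s^2 / (\<theta>^2 * \<tau>)) * 1"
        using z0 zh by (intro mult_left_mono) auto
      then show ?thesis by (simp add: power2_eq_square algebra_simps)
    qed
    moreover have "s^2 * t / 8 \<le> 1 / \<tau>"
    proof -
      have "s^2 * t * \<tau> \<le> S1^2 * t * \<tau>" using ss t tp by (intro mult_right_mono) auto
      then have "s^2 * t * \<tau> \<le> 8" using St by linarith
      then show ?thesis using tp by (simp add: field_simps)
    qed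
    moreover have "3 * S1^2 / (\<theta>^2 * \<tau>) = (3 * S1^2 / \<theta>^2) / \<tau>" by simp
    ultimately have lr: "ln \<rho> \<ge> - (1 / \<tau>) - 2 * ((3 * S1^2 / \<theta>^2) / \<tau>)" using z1 by linarith
    have e5: "(2 + 6 * S1^2 / \<theta>^2) / \<tau> = 1 / \<tau> + (1 / \<tau> + 2 * ((3 * S1^2 / \<theta>^2) / \<tau>))"
      by (simp add: add_divide_distrib)
    have nn: "0 \<le> 2 * ((3 * S1^2 / \<theta>^2) / \<tau>)" using tp by simp
    show ?thesis unfolding abs_le_iff e5 using lr kabs' ln\<rho> nn by (intro conjI; linarith)
  qed
  show ?thesis using slow supp Rb KI by (simp add: \<rho>_def c_def add.assoc)
qed


lemma D_bounds:
  fixes c1 c2 :: real and I :: "real \<Rightarrow> real"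
  assumes c1: "c1 > 1/2"
    and ev1: "eventually (\<lambda>t. c1 < ln (I t) / ln t) (at_right 0)"
    and ev2: "eventually (\<lambda>t. ln (I t) / ln t < c2) (at_right 0)"
  shows "eventually (\<lambda>t. c1 - 1/2 \<le> 2 * J_fun t (I t) - 1 \<and> 2 * J_fun t (I t) - 1 \<le> 2 * c2 - 1) (at_right 0)"
proof -
  have e1: "eventually (\<lambda>t. 1 \<le> ln (1 / t)) (at_right (0::real))"
    using A1 unfolding filterlim_at_top by auto
  have e2: "eventually (\<lambda>t. ln (ln (1 / t)) / ln (1 / t) < (c1 - 1/2) / 2) (at_right (0::real))"
    by (rule order_tendstoD(2)[OF A2]) (use c1 in simp)
  show ?thesis using e1 e2 ev1 ev2
  proof eventually_elim
    case (elim t)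
    have "ln (ln (1 / t)) \<ge> 0" using elim(1) by simp
    then have "ln (ln (1 / t)) / ln (1 / t) \<ge> 0" using elim(1) by simp
    have lin: "\<And>(a::real) (l::real) (c1::real) (c2::real). 0 \<le> a \<Longrightarrow> a < (c1 - 1/2) / 2 \<Longrightarrow> c1 < l \<Longrightarrow> l < c2 \<Longrightarrow>
      c1 - 1/2 \<le> 2 * (l - a) - 1 \<and> 2 * (l - a) - 1 \<le> 2 * c2 - 1"
      by auto
    show ?case unfolding J_fun_def by (rule lin) (use elim \<open>ln (ln (1 / t)) / ln (1 / t) \<ge> 0\<close> in auto)
  qed
qed

lemma main_O:
  fixes \<theta> c1 c2 :: real and I sig :: "real \<Rightarrow> real"
  assumes th: "\<theta> \<noteq> 0" and c1: "c1 > 1/2"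
    and evQ: "eventually (\<lambda>t. sig t > 0 \<and> Qf (\<theta> * sqrt (t * ln (1/t))) (sig t * sqrt t) = I t) (at_right 0)"
    and evI: "eventually (\<lambda>t. I t > 0) (at_right 0)"
    and ev1: "eventually (\<lambda>t. c1 < ln (I t) / ln t) (at_right 0)"
    and ev2: "eventually (\<lambda>t. ln (I t) / ln t < c2) (at_right 0)"
  shows "(\<lambda>t. sig t - (\<bar>\<theta>\<bar> / sqrt (2 * J_fun t (I t) - 1)
            + \<bar>\<theta>\<bar> * ln ((2 * J_fun t (I t) - 1) powr (3/2) * sqrt (2 * pi) / \<bar>\<theta>\<bar>)
                / (2 * J_fun t (I t) - 1) powr (3/2) * (1 / ln (1 / t))))
          \<in> O[at_right 0](\<lambda>t. 1 / (ln (1 / t)) ^ 2)"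
proof -
  define d0 where "d0 = c1 - 1/2"
  define d1 where "d1 = 2 * c2 - 1"
  have d0p: "d0 > 0" using c1 by (simp add: d0_def)
  have evD: "eventually (\<lambda>t. d0 \<le> 2 * J_fun t (I t) - 1 \<and> 2 * J_fun t (I t) - 1 \<le> d1) (at_right 0)"
    unfolding d0_def d1_def by (rule D_bounds[OF c1 ev1 ev2])
  define c where "c = \<theta>^2 * sqrt (2 * pi)"
  define S1 where "S1 = \<bar>\<theta>\<bar> * sqrt (2 / d0)"
  define s0 where "s0 = min 1 (\<bar>\<theta>\<bar> / sqrt (d1 + 2 * (\<bar>ln c\<bar> + 1)))"
  define KR where "KR = 2 + 6 * S1^2 / \<theta>^2"
  have d01: "d0 \<le> d1"
  proof -
    have "at_right (0::real) = bot \<or> (\<exists>t. d0 \<le> 2 * J_fun t (I t) - 1 \<and> 2 * J_fun t (I t) - 1 \<le> d1)"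
      by (rule eventually_happens[OF evD])
    then show ?thesis by auto
  qed
  have s0p: "s0 > 0" using th d01 d0p by (simp add: s0_def)
  have KRp: "KR \<ge> 0" by (simp add: KR_def)
  have S1p: "S1 > 0" using th d0p by (simp add: S1_def)
  obtain K where K: "\<And>\<tau> s D R. \<tau> \<ge> 1 \<Longrightarrow> s0 \<le> s \<Longrightarrow> s \<le> S1 \<Longrightarrow> d0 \<le> D \<Longrightarrow> D \<le> d1 \<Longrightarrow> \<bar>R\<bar> \<le> KR / \<tau> \<Longrightarrow>
     \<theta>^2 / s^2 = D + (2 / \<tau>) * (ln (s^3 / (\<theta>^2 * sqrt (2 * pi))) + R) \<Longrightarrow>
     \<bar>s - (\<bar>\<theta>\<bar> / sqrt D + \<bar>\<theta>\<bar> * ln (D powr (3/2) * sqrt (2 * pi) / \<bar>\<theta>\<bar>) / D powr (3/2) * (1 / \<tau>))\<bar> \<le> K / \<tau>^2"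
    using inversion[OF th d0p s0p KRp, of S1 d1] by blast
  define B2 where "B2 = \<bar>ln (S1^3 / c)\<bar> + 1 + ln 2"
  have B2p: "B2 \<ge> 0" by (simp add: B2_def)
  define T where "T = max 8 (max (4 * B2 / d0 + 1) (15 * S1^2 / (2 * \<theta>^2)))"
  have E1: "eventually (\<lambda>t. 0 < t \<and> t < (1::real)) (at_right 0)"
    unfolding eventually_at_right_field by (intro exI[of _ 1]) auto
  have E2: "eventually (\<lambda>t. T \<le> ln (1 / t)) (at_right (0::real))"
    using A1 unfolding filterlim_at_top by auto
  have E3: "eventually (\<lambda>t. sqrt (t * ln (1 / t)) * ln (1 / t) < 2 / \<bar>\<theta>\<bar>) (at_right (0::real))"
    by (rule order_tendstoD(2)[OF A3]) (use th in simp)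
  have E4: "eventually (\<lambda>t. t * ln (1 / t) < 8 / S1^2) (at_right (0::real))"
    by (rule order_tendstoD(2)[OF A4]) (use S1p in simp)
  have "eventually (\<lambda>t. \<bar>sig t - (\<bar>\<theta>\<bar> / sqrt (2 * J_fun t (I t) - 1)
            + \<bar>\<theta>\<bar> * ln ((2 * J_fun t (I t) - 1) powr (3/2) * sqrt (2 * pi) / \<bar>\<theta>\<bar>)
                / (2 * J_fun t (I t) - 1) powr (3/2) * (1 / ln (1 / t)))\<bar> \<le> K * \<bar>1 / (ln (1 / t)) ^ 2\<bar>) (at_right 0)"
    using E1 E2 E3 E4 evQ evI evD
  proof eventually_elim
    case (elim t)
    define \<tau> where "\<tau> = ln (1 / t)"
    define k where "k = \<theta> * sqrt (t * \<tau>)"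
    define D where "D = 2 * J_fun t (I t) - 1"
    have t: "0 < t" "t < 1" using elim by auto
    have tauT: "T \<le> \<tau>" using elim by (simp add: \<tau>_def)
    have tau1: "\<tau> \<ge> 8" using tauT by (simp add: T_def)
    have tp: "\<tau> > 0" using tau1 by simp
    have tau2: "(2 / \<tau>) * (\<bar>ln (S1^3 / (\<theta>^2 * sqrt (2 * pi)))\<bar> + 1 + ln 2) < d0 / 2"
    proof -
      have "4 * B2 / d0 < \<tau>" using tauT by (simp add: T_def)
      then have "4 * B2 < \<tau> * d0" using d0p by (simp add: divide_less_eq)
      then show ?thesis using tp d0p by (simp add: B2_def c_def field_simps)
    qed
    have tau3: "3 * S1^2 / (\<theta>^2 * \<tau>) \<le> 2 / 5"
    proof -
      have "15 * S1^2 / (2 * \<theta>^2) \<le> \<tau>" using tauT by (simp add: T_def)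
      then have "15 * S1^2 \<le> \<tau> * (2 * \<theta>^2)" using th by (simp add: divide_le_eq)
      then show ?thesis using tp th by (simp add: field_simps)
    qed
    have kt: "\<bar>k\<bar> * \<tau> \<le> 2"
    proof -
      have "\<bar>k\<bar> * \<tau> = \<bar>\<theta>\<bar> * (sqrt (t * \<tau>) * \<tau>)" using tp t by (simp add: k_def abs_mult)
      also have "\<dots> \<le> \<bar>\<theta>\<bar> * (2 / \<bar>\<theta>\<bar>)" using elim(3) by (intro mult_left_mono) (auto simp: \<tau>_def)
      also have "\<dots> = 2" using th by simp
      finally show ?thesis .
    qed
    have St: "S1^2 * t * \<tau> \<le> 8"
    proof -
      have "t * \<tau> < 8 / S1^2" using elim(4) by (simp add: \<tau>_def)
      then have "S1^2 * (t * \<tau>) < 8" using S1p by (simp add: less_divide_eq mult.commute)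
      then show ?thesis by (simp add: mult.assoc)
    qed
    have Qt: "Qf k (sig t * sqrt t) = I t" "sig t > 0" using elim(5) by (simp_all add: k_def \<tau>_def)
    have Db: "d0 \<le> D" "D \<le> d1" using elim(7) by (simp_all add: D_def)
    have Dform: "D = 2 * (ln (I t) / ln t - ln \<tau> / \<tau>) - 1" by (simp add: D_def J_fun_def \<tau>_def)
    have P: "s0 \<le> sig t \<and> sig t \<le> S1 \<and> \<bar>k / 2 + ln (I t / Hf k (sig t * sqrt t))\<bar> \<le> (2 + 6 * S1^2 / \<theta>^2) / \<tau>
     \<and> \<theta>^2 / (sig t)^2 = D + (2 / \<tau>) * (ln ((sig t)^3 / (\<theta>^2 * sqrt (2 * pi))) + (k / 2 + ln (I t / Hf k (sig t * sqrt t))))"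
      by (rule pert[OF t \<tau>_def k_def th Qt(2) elim(6) Qt(1) Dform Db d0p S1_def s0_def[unfolded c_def] tau1 tau2 tau3 kt St])
    have P1: "s0 \<le> sig t" and P2: "sig t \<le> S1"
      and P3: "\<bar>k / 2 + ln (I t / Hf k (sig t * sqrt t))\<bar> \<le> KR / \<tau>"
      and P4: "\<theta>^2 / (sig t)^2 = D + (2 / \<tau>) * (ln ((sig t)^3 / (\<theta>^2 * sqrt (2 * pi))) + (k / 2 + ln (I t / Hf k (sig t * sqrt t))))"
      using P unfolding KR_def by blast+
    have t1: "\<tau> \<ge> 1" using tau1 by simp
    have Kres: "\<bar>sig t - (\<bar>\<theta>\<bar> / sqrt D + \<bar>\<theta>\<bar> * ln (D powr (3/2) * sqrt (2 * pi) / \<bar>\<theta>\<bar>) / D powr (3/2) * (1 / \<tau>))\<bar> \<le> K / \<tau>^2"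
      by (rule K[OF t1 P1 P2 Db P3 P4])
    have eqn: "K * \<bar>1 / (ln (1 / t)) ^ 2\<bar> = K / (ln (1 / t)) ^ 2" by simp
    show ?case unfolding eqn by (rule Kres[unfolded D_def \<tau>_def])
  qed
  then show ?thesis by (intro bigoI[where c=K]) simp
qed


definition hf :: "real \<Rightarrow> real \<Rightarrow> real" where
  "hf \<theta> x = \<bar>\<theta>\<bar> * ln (x powr (3/2) * sqrt (2 * pi) / \<bar>\<theta>\<bar>) / x powr (3/2)"

lemma hf_cont: "\<theta> \<noteq> 0 \<Longrightarrow> 0 < a \<Longrightarrow> continuous_on {a..b} (hf \<theta>)"
  unfolding hf_def[abs_def] by (intro continuous_intros) auto

lemma main_o_part:
  fixes \<theta> d0 d1 :: real and I Ihat :: "real \<Rightarrow> real"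
  assumes th: "\<theta> \<noteq> 0" and d0: "d0 > 0"
    and evI: "eventually (\<lambda>t. I t > 0) (at_right 0)"
    and evD: "eventually (\<lambda>t. d0 \<le> 2 * J_fun t (I t) - 1 \<and> 2 * J_fun t (I t) - 1 \<le> d1) (at_right 0)"
    and asym: "I \<sim>[at_right 0] Ihat"
  shows "(\<lambda>t. (\<bar>\<theta>\<bar> / sqrt (2 * J_fun t (I t) - 1) + hf \<theta> (2 * J_fun t (I t) - 1) * (1 / ln (1 / t)))
            - (\<bar>\<theta>\<bar> / sqrt (2 * J_fun t (Ihat t) - 1) + hf \<theta> (2 * J_fun t (Ihat t) - 1) * (1 / ln (1 / t))))
         \<in> o[at_right 0](\<lambda>t. 1 / ln (1 / t))"
proof -
  define D where "D = (\<lambda>t. 2 * J_fun t (I t) - 1)"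
  define Dh where "Dh = (\<lambda>t. 2 * J_fun t (Ihat t) - 1)"
  define m where "m = d0 / 2"
  have mp: "m > 0" using d0 by (simp add: m_def)
  have rat: "((\<lambda>t. I t / Ihat t) \<longlongrightarrow> 1) (at_right 0)"
  proof -
    have "((\<lambda>x. if I x = 0 \<and> Ihat x = 0 then 1 else I x / Ihat x) \<longlongrightarrow> 1) (at_right 0)"
      by (rule asymp_equivD[OF asym])
    moreover have "eventually (\<lambda>x. (if I x = 0 \<and> Ihat x = 0 then 1 else I x / Ihat x) = I x / Ihat x) (at_right 0)"
      using evI by eventually_elim auto
    ultimately show ?thesis by (rule Lim_transform_eventually)
  qed
  have lnrat: "((\<lambda>t. ln (I t / Ihat t)) \<longlongrightarrow> 0) (at_right 0)"
    using tendsto_ln[OF rat] by simp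
  have evpos: "eventually (\<lambda>t. I t / Ihat t > 0) (at_right 0)"
    using order_tendstoD(1)[OF rat, of 0] by simp
  have tau0: "((\<lambda>t::real. 2 / ln (1 / t)) \<longlongrightarrow> 0) (at_right 0)" by real_asymp
  have diff0: "((\<lambda>t. 2 / ln (1 / t) * ln (I t / Ihat t)) \<longlongrightarrow> 0) (at_right 0)"
    using tendsto_mult[OF tau0 lnrat] by simp
  have E1: "eventually (\<lambda>t. 0 < t \<and> t < (1::real)) (at_right 0)"
    unfolding eventually_at_right_field by (intro exI[of _ 1]) auto
  have E2: "eventually (\<lambda>t. 1 \<le> ln (1 / t)) (at_right (0::real))"
    using A1 unfolding filterlim_at_top by auto
  have Ddiff: "eventually (\<lambda>t. Dh t - D t = 2 / ln (1 / t) * ln (I t / Ihat t) \<and> Ihat t > 0) (at_right 0)"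
    using E1 evI evpos
  proof eventually_elim
    case (elim t)
    have Ih: "Ihat t > 0" using elim by (auto simp: zero_less_divide_iff)
    have "ln t = - ln (1 / t)" using elim by (simp add: ln_div)
    moreover have "ln (I t / Ihat t) = ln (I t) - ln (Ihat t)" using elim Ih by (simp add: ln_div)
    have a: "Dh t - D t = 2 * (ln (Ihat t) - ln (I t)) / ln t"
      by (simp add: D_def Dh_def J_fun_def algebra_simps diff_divide_distrib)
    have b: "2 * (ln (Ihat t) - ln (I t)) / ln t = 2 * (ln (I t) - ln (Ihat t)) / ln (1 / t)"
      unfolding \<open>ln t = - ln (1 / t)\<close> by (simp add: divide_simps)
    have "Dh t - D t = 2 / ln (1 / t) * ln (I t / Ihat t)"
      unfolding a b \<open>ln (I t / Ihat t) = ln (I t) - ln (Ihat t)\<close> by simp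
    then show ?case using Ih by simp
  qed
  have E3: "eventually (\<lambda>t. \<bar>2 / ln (1 / t) * ln (I t / Ihat t)\<bar> < min 1 m) (at_right 0)"
    by (rule order_tendstoD(2)[OF tendsto_rabs_zero[OF diff0]]) (use mp in simp)
  define C1 where "C1 = \<bar>\<theta>\<bar> * 2 / (2 * m * sqrt m)"
  have T1: "((\<lambda>t. ln (1 / t) * (\<bar>\<theta>\<bar> / sqrt (D t) - \<bar>\<theta>\<bar> / sqrt (Dh t))) \<longlongrightarrow> 0) (at_right 0)"
  proof (rule Lim_null_comparison)
    show "eventually (\<lambda>t. norm (ln (1 / t) * (\<bar>\<theta>\<bar> / sqrt (D t) - \<bar>\<theta>\<bar> / sqrt (Dh t))) \<le> C1 * \<bar>ln (I t / Ihat t)\<bar>) (at_right 0)"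
      using E1 E2 Ddiff evD E3
    proof eventually_elim
      case (elim t)
      have tp: "ln (1 / t) > 0" using elim by simp
      have Dm: "D t \<ge> m" using elim d0 by (simp add: D_def m_def)
      have Dhm: "Dh t \<ge> m"
      proof -
        have "\<bar>Dh t - D t\<bar> < m" using elim by simp
        then have "Dh t > D t - m" by (simp add: abs_less_iff)
        moreover have "D t \<ge> 2 * m" using elim by (simp add: D_def m_def)
        ultimately show ?thesis by simp
      qed
      have "norm (ln (1 / t) * (\<bar>\<theta>\<bar> / sqrt (D t) - \<bar>\<theta>\<bar> / sqrt (Dh t)))
          = ln (1 / t) * \<bar>\<theta>\<bar> * \<bar>1 / sqrt (D t) - 1 / sqrt (Dh t)\<bar>"
      proof -
        have h: "\<bar>\<theta>\<bar> / sqrt (D t) - \<bar>\<theta>\<bar> / sqrt (Dh t) = \<bar>\<theta>\<bar> * (1 / sqrt (D t) - 1 / sqrt (Dh t))"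
          by (simp add: right_diff_distrib)
        show ?thesis unfolding h using tp by (simp add: abs_mult)
      qed
      also have "\<dots> \<le> ln (1 / t) * \<bar>\<theta>\<bar> * (\<bar>D t - Dh t\<bar> / (2 * m * sqrt m))"
        using tp by (intro mult_left_mono inv_sqrt_lip mp Dm Dhm) auto
      also have "\<bar>D t - Dh t\<bar> = 2 / ln (1 / t) * \<bar>ln (I t / Ihat t)\<bar>"
      proof -
        have ee: "Dh t - D t = 2 / ln (1 / t) * ln (I t / Ihat t)" using elim(3) by (rule conjunct1)
        have "\<bar>D t - Dh t\<bar> = \<bar>Dh t - D t\<bar>" by (rule abs_minus_commute)
        also have "\<dots> = 2 / ln (1 / t) * \<bar>ln (I t / Ihat t)\<bar>" unfolding ee using tp by (simp add: abs_mult)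
        finally show ?thesis .
      qed
      also have "ln (1 / t) * \<bar>\<theta>\<bar> * (2 / ln (1 / t) * \<bar>ln (I t / Ihat t)\<bar> / (2 * m * sqrt m)) = C1 * \<bar>ln (I t / Ihat t)\<bar>"
        using tp by (simp add: C1_def)
      finally show ?case .
    qed
    show "((\<lambda>t. C1 * \<bar>ln (I t / Ihat t)\<bar>) \<longlongrightarrow> 0) (at_right 0)"
      using tendsto_mult_right_zero[OF tendsto_rabs_zero[OF lnrat], of C1] by simp
  qed
  have T2: "((\<lambda>t. hf \<theta> (D t) - hf \<theta> (Dh t)) \<longlongrightarrow> 0) (at_right 0)"
  proof (rule tendstoI)
    fix e :: real assume e: "e > 0"
    have "uniformly_continuous_on {m..d1+1} (hf \<theta>)"
      by (rule compact_uniformly_continuous[OF hf_cont[OF th mp]]) simp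
    then obtain \<delta> where \<delta>: "\<delta> > 0" "\<And>x x'. x \<in> {m..d1+1} \<Longrightarrow> x' \<in> {m..d1+1} \<Longrightarrow> dist x' x < \<delta> \<Longrightarrow> dist (hf \<theta> x') (hf \<theta> x) < e"
      unfolding uniformly_continuous_on_def using e by metis
    have E4: "eventually (\<lambda>t. \<bar>2 / ln (1 / t) * ln (I t / Ihat t)\<bar> < \<delta>) (at_right 0)"
      by (rule order_tendstoD(2)[OF tendsto_rabs_zero[OF diff0] \<delta>(1)])
    show "eventually (\<lambda>t. dist (hf \<theta> (D t) - hf \<theta> (Dh t)) 0 < e) (at_right 0)"
      using Ddiff evD E3 E4
    proof eventually_elim
      case (elim t)
      have Dm: "D t \<in> {m..d1+1}" using elim d0 by (simp add: D_def m_def)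
      have "\<bar>Dh t - D t\<bar> < min 1 m" using elim by simp
      then have "Dh t > D t - m" "Dh t < D t + 1" by (simp_all add: abs_less_iff)
      moreover have "D t \<ge> 2 * m" "D t \<le> d1" using elim by (simp_all add: D_def m_def)
      ultimately have Dhm: "Dh t \<in> {m..d1+1}" by simp
      have "dist (Dh t) (D t) < \<delta>" using elim by (simp add: dist_real_def)
      then have "dist (hf \<theta> (Dh t)) (hf \<theta> (D t)) < e" by (rule \<delta>(2)[OF Dm Dhm])
      then show ?case by (simp add: dist_real_def abs_minus_commute)
    qed
  qed
  have lim: "((\<lambda>t. ((\<bar>\<theta>\<bar> / sqrt (D t) + hf \<theta> (D t) * (1 / ln (1 / t)))
            - (\<bar>\<theta>\<bar> / sqrt (Dh t) + hf \<theta> (Dh t) * (1 / ln (1 / t)))) / (1 / ln (1 / t))) \<longlongrightarrow> 0) (at_right 0)"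
  proof -
    have "((\<lambda>t. ln (1 / t) * (\<bar>\<theta>\<bar> / sqrt (D t) - \<bar>\<theta>\<bar> / sqrt (Dh t)) + (hf \<theta> (D t) - hf \<theta> (Dh t))) \<longlongrightarrow> 0 + 0) (at_right 0)"
      by (intro tendsto_add T1 T2)
    moreover have "eventually (\<lambda>t. ln (1 / t) * (\<bar>\<theta>\<bar> / sqrt (D t) - \<bar>\<theta>\<bar> / sqrt (Dh t)) + (hf \<theta> (D t) - hf \<theta> (Dh t))
        = ((\<bar>\<theta>\<bar> / sqrt (D t) + hf \<theta> (D t) * (1 / ln (1 / t)))
            - (\<bar>\<theta>\<bar> / sqrt (Dh t) + hf \<theta> (Dh t) * (1 / ln (1 / t)))) / (1 / ln (1 / t))) (at_right 0)"
      using E2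
    proof eventually_elim
      case (elim t)
      then show ?case by (simp add: field_simps)
    qed
    ultimately show ?thesis by (simp add: Lim_transform_eventually)
  qed
  have "eventually (\<lambda>t. 1 / ln (1 / t) \<noteq> (0::real)) (at_right 0)"
    using E2 by eventually_elim auto
  from smalloI_tendsto[OF lim this] show ?thesis by (simp add: D_def Dh_def)
qed


theorem theorem3p1:
  fixes M :: "'a measure" and F :: "real \<Rightarrow> 'a measure" and S :: "real \<Rightarrow> 'a \<Rightarrow> real"
    and \<theta> :: real and Chat Phat :: "real \<Rightarrow> real"
  defines "k \<equiv> (\<lambda>t. \<theta> * sqrt (t * ln (1 / t)))"
  defines "I \<equiv> (\<lambda>t. (if \<theta> > 0 then call_price M S t (k t) else 0)
                     + (if \<theta> < 0 then put_price M S t (k t) else 0))"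
  defines "Ihat \<equiv> (\<lambda>t. (if \<theta> > 0 then Chat t else 0) + (if \<theta> < 0 then Phat t else 0))"
  defines "L \<equiv> (\<lambda>t. J_fun t (I t))"
  defines "Lhat \<equiv> (\<lambda>t. J_fun t (Ihat t))"
  defines "\<sigma> \<equiv> (\<lambda>t. implied_vol t (k t) (call_price M S t (k t)))"
  assumes mart: "martingale M F S"
    and pos: "\<And>t \<omega>. t \<ge> 0 \<Longrightarrow> \<omega> \<in> space M \<Longrightarrow> S t \<omega> > 0"
    and init: "\<And>\<omega>. \<omega> \<in> space M \<Longrightarrow> S 0 \<omega> = 1"
    and theta: "\<theta> \<noteq> 0"
    and Chat: "(\<lambda>t. call_price M S t (k t)) \<sim>[at_right 0] Chat"
    and Phat: "(\<lambda>t. put_price M S t (k t)) \<sim>[at_right 0] Phat"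
    and liminf: "Liminf (at_right 0) (\<lambda>t. ereal (ln (I t) / ln t)) > ereal (1/2)"
    and limsup: "Limsup (at_right 0) (\<lambda>t. ereal (ln (I t) / ln t)) < \<infinity>"
  shows "((\<lambda>t. \<sigma> t - (\<bar>\<theta>\<bar> / sqrt (2 * L t - 1)
            + \<bar>\<theta>\<bar> * ln ((2 * L t - 1) powr (3/2) * sqrt (2 * pi) / \<bar>\<theta>\<bar>)
                / (2 * L t - 1) powr (3/2) * (1 / ln (1 / t))))
          \<in> O[at_right 0](\<lambda>t. 1 / (ln (1 / t)) ^ 2))
      \<and> ((\<lambda>t. \<sigma> t - (\<bar>\<theta>\<bar> / sqrt (2 * Lhat t - 1)
            + \<bar>\<theta>\<bar> * ln ((2 * Lhat t - 1) powr (3/2) * sqrt (2 * pi) / \<bar>\<theta>\<bar>)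
                / (2 * Lhat t - 1) powr (3/2) * (1 / ln (1 / t))))
          \<in> o[at_right 0](\<lambda>t. 1 / ln (1 / t)))"
proof -
  have ps: "prob_space M" using mart unfolding martingale_def by auto
  obtain z where z: "ereal (1/2) < z" "z < Liminf (at_right 0) (\<lambda>t. ereal (ln (I t) / ln t))"
    using dense[OF liminf] by blast
  define c1 where "c1 = real_of_ereal z"
  have zc1: "z = ereal c1" using z unfolding c1_def by (cases z) auto
  have c1: "c1 > 1/2" using z(1) zc1 by simp
  have ev1: "eventually (\<lambda>t. c1 < ln (I t) / ln t) (at_right 0)"
    using less_LiminfD[OF z(2)] zc1 by simp
  obtain w where w: "Limsup (at_right 0) (\<lambda>t. ereal (ln (I t) / ln t)) < w" "w < \<infinity>"
    using dense[OF limsup] by blast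
  define c2 where "c2 = real_of_ereal w"
  have wc2: "w = ereal c2" using w unfolding c2_def by (cases w) auto
  have ev2: "eventually (\<lambda>t. ln (I t) / ln t < c2) (at_right 0)"
    using Limsup_lessD[OF w(1)] wc2 by simp
  have E1: "eventually (\<lambda>t. 0 < t \<and> t < (1::real)) (at_right 0)"
    unfolding eventually_at_right_field by (intro exI[of _ 1]) auto
  have Inn: "I t \<ge> 0" if "t \<ge> 0" for t
    using prices[OF mart pos init that, of "k t"] by (simp add: I_def)
  have evI: "eventually (\<lambda>t. I t > 0) (at_right 0)"
    using E1 ev1
  proof eventually_elim
    case (elim t)
    show ?case
    proof (rule ccontr)
      assume "\<not> I t > 0"
      then have "I t = 0" using Inn[of t] elim by simp
      then show False using elim c1 by simp
    qed
  qed
  have evQ: "eventually (\<lambda>t. \<sigma> t > 0 \<and> Qf (\<theta> * sqrt (t * ln (1/t))) (\<sigma> t * sqrt t) = I t) (at_right 0)"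
    using E1 evI
  proof eventually_elim
    case (elim t)
    have t: "0 < t" "t < 1" using elim by auto
    have tp: "ln (1 / t) > 0" using t by simp
    have t0: "t \<ge> 0" using t by simp
    note pr = prices[OF mart pos init t0, of "k t"]
    show ?case
    proof (cases "\<theta> > 0")
      case True
      then have kp: "k t > 0" using tp t by (simp add: k_def)
      have mx: "max (1 - exp (k t)) 0 = 0" using kp by simp
      have IC: "I t = call_price M S t (k t)" using True by (simp add: I_def)
      have ch: "implied_vol t (k t) (call_price M S t (k t)) > 0"
        "Qf (k t) (implied_vol t (k t) (call_price M S t (k t)) * sqrt t) = call_price M S t (k t) - max (1 - exp (k t)) 0"
        using implied_vol_char[OF t(1), of "k t" "call_price M S t (k t)"] kp elim pr t unfolding mx IC by auto
      have kk: "k t = \<theta> * sqrt (t * ln (1 / t))" by (simp add: k_def)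
      show ?thesis unfolding kk[symmetric] \<sigma>_def using ch mx IC by simp
    next
      case False
      then have neg: "\<theta> < 0" using theta by simp
      then have kn: "k t < 0" using tp t by (simp add: k_def mult_neg_pos)
      have mx: "max (1 - exp (k t)) 0 = 1 - exp (k t)" using kn by simp
      have IP: "I t = put_price M S t (k t)" using neg by (simp add: I_def)
      have par: "call_price M S t (k t) - (1 - exp (k t)) = put_price M S t (k t)" using pr(1) by simp
      have ch: "implied_vol t (k t) (call_price M S t (k t)) > 0"
        "Qf (k t) (implied_vol t (k t) (call_price M S t (k t)) * sqrt t) = call_price M S t (k t) - max (1 - exp (k t)) 0"
        using implied_vol_char[OF t(1), of "k t" "call_price M S t (k t)"] kn elim pr t unfolding mx par IP by auto
      have kk: "k t = \<theta> * sqrt (t * ln (1 / t))" by (simp add: k_def)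
      show ?thesis unfolding kk[symmetric] \<sigma>_def using ch mx IP par by simp
    qed
  qed
  have part1: "(\<lambda>t. \<sigma> t - (\<bar>\<theta>\<bar> / sqrt (2 * L t - 1)
            + \<bar>\<theta>\<bar> * ln ((2 * L t - 1) powr (3/2) * sqrt (2 * pi) / \<bar>\<theta>\<bar>)
                / (2 * L t - 1) powr (3/2) * (1 / ln (1 / t))))
          \<in> O[at_right 0](\<lambda>t. 1 / (ln (1 / t)) ^ 2)"
    unfolding L_def by (rule main_O[OF theta c1 evQ evI ev1 ev2])
  have asym: "I \<sim>[at_right 0] Ihat"
  proof (cases "\<theta> > 0")
    case True
    then have "I = (\<lambda>t. call_price M S t (k t))" "Ihat = Chat" by (auto simp: I_def Ihat_def fun_eq_iff)
    then show ?thesis using Chat by simp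
  next
    case False
    then have neg: "\<theta> < 0" using theta by simp
    then have "I = (\<lambda>t. put_price M S t (k t))" "Ihat = Phat" by (auto simp: I_def Ihat_def fun_eq_iff)
    then show ?thesis using Phat by simp
  qed
  have d0: "c1 - 1/2 > 0" using c1 by simp
  have o2: "(\<lambda>t. (\<bar>\<theta>\<bar> / sqrt (2 * J_fun t (I t) - 1) + hf \<theta> (2 * J_fun t (I t) - 1) * (1 / ln (1 / t)))
            - (\<bar>\<theta>\<bar> / sqrt (2 * J_fun t (Ihat t) - 1) + hf \<theta> (2 * J_fun t (Ihat t) - 1) * (1 / ln (1 / t))))
         \<in> o[at_right 0](\<lambda>t. 1 / ln (1 / t))"
    by (rule main_o_part[OF theta d0 evI D_bounds[OF c1 ev1 ev2] asym])
  have o1: "(\<lambda>t. \<sigma> t - (\<bar>\<theta>\<bar> / sqrt (2 * L t - 1)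
            + \<bar>\<theta>\<bar> * ln ((2 * L t - 1) powr (3/2) * sqrt (2 * pi) / \<bar>\<theta>\<bar>)
                / (2 * L t - 1) powr (3/2) * (1 / ln (1 / t))))
          \<in> o[at_right 0](\<lambda>t. 1 / ln (1 / t))"
    by (rule landau_o.big_small_trans[OF part1 A6])
  have "(\<lambda>t. (\<sigma> t - (\<bar>\<theta>\<bar> / sqrt (2 * L t - 1)
            + \<bar>\<theta>\<bar> * ln ((2 * L t - 1) powr (3/2) * sqrt (2 * pi) / \<bar>\<theta>\<bar>)
                / (2 * L t - 1) powr (3/2) * (1 / ln (1 / t))))
          + ((\<bar>\<theta>\<bar> / sqrt (2 * J_fun t (I t) - 1) + hf \<theta> (2 * J_fun t (I t) - 1) * (1 / ln (1 / t)))
            - (\<bar>\<theta>\<bar> / sqrt (2 * J_fun t (Ihat t) - 1) + hf \<theta> (2 * J_fun t (Ihat t) - 1) * (1 / ln (1 / t)))))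
        \<in> o[at_right 0](\<lambda>t. 1 / ln (1 / t))"
    by (rule sum_in_smallo(1)[OF o1 o2])
  moreover have "(\<lambda>t. (\<sigma> t - (\<bar>\<theta>\<bar> / sqrt (2 * L t - 1)
            + \<bar>\<theta>\<bar> * ln ((2 * L t - 1) powr (3/2) * sqrt (2 * pi) / \<bar>\<theta>\<bar>)
                / (2 * L t - 1) powr (3/2) * (1 / ln (1 / t))))
          + ((\<bar>\<theta>\<bar> / sqrt (2 * J_fun t (I t) - 1) + hf \<theta> (2 * J_fun t (I t) - 1) * (1 / ln (1 / t)))
            - (\<bar>\<theta>\<bar> / sqrt (2 * J_fun t (Ihat t) - 1) + hf \<theta> (2 * J_fun t (Ihat t) - 1) * (1 / ln (1 / t)))))
      = (\<lambda>t. \<sigma> t - (\<bar>\<theta>\<bar> / sqrt (2 * Lhat t - 1)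
            + \<bar>\<theta>\<bar> * ln ((2 * Lhat t - 1) powr (3/2) * sqrt (2 * pi) / \<bar>\<theta>\<bar>)
                / (2 * Lhat t - 1) powr (3/2) * (1 / ln (1 / t))))"
    by (rule ext) (simp add: L_def Lhat_def hf_def)
  ultimately have part2: "(\<lambda>t. \<sigma> t - (\<bar>\<theta>\<bar> / sqrt (2 * Lhat t - 1)
            + \<bar>\<theta>\<bar> * ln ((2 * Lhat t - 1) powr (3/2) * sqrt (2 * pi) / \<bar>\<theta>\<bar>)
                / (2 * Lhat t - 1) powr (3/2) * (1 / ln (1 / t))))
          \<in> o[at_right 0](\<lambda>t. 1 / ln (1 / t))" by simp
  show ?thesis using part1 part2 by blast
qed


end
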